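(* Let $\Gamma_H$ be the H-junction tree with edges $e_1,\dots,e_5$ of propagation times $t_1,\dots,t_5$, where the interior vertices are $A$ (incident to $e_1,e_2,e_3$) and $B$ (incident to $e_3,e_4,e_5$), and let $\Gamma'_H$ be obtained from $\Gamma_H$ by permuting the edges $e_1$ and $e_5$ (so in $\Gamma'_H$ the vertex $A$ is incident to $e_5,e_2,e_3$ and $B$ to $e_3,e_4,e_1$). If $(t_1,\dots,t_5)$ satisfies Assumption 1, then as $T\to\infty$ $$N(\Gamma_H, A, T) - N(\Gamma'_H, A, T) = -\frac{1}{96\, t_2t_4}\left(\frac{1}{t_5} - \frac{1}{t_1}\right) T^3 + o(T^3).$$
   Context: An H-junction has six vertices: two interior vertices of valence $3$ joined by one edge (here $e_3$, the "jumper"), and four valence-one vertices, each joined to one of the interior vertices by one of the remaining four edges (two per interior vertex). Dynamics: each edge $e_i$ is traversed in time $t_i$; at time $0$ the process starts at $A$ (a point departs from $A$ along each incident edge); at a valence-one vertex a point is reflected; if $k$ points arrive simultaneously at an interior vertex of valence $v$, then $v$ points leave it, one along each incident edge. $N(\Gamma,A,T)$ is the total number of points moving on the graph $\Gamma$ at time $T$ when the process starts at vertex $A$. Assumption 1: $t_1,\dots,t_5$ are linearly independent over $\mathbb{Q}$, and for every $1\le m\le 4$ and every $m$-element subset $\{s_{i_1},\dots,s_{i_m}\}\subset\{t_1,\dots,t_5\}$ the number of tuples of nonnegative integers with $s_{i_1}n_{i_1}+\dots+s_{i_m}n_{i_m}\le T$ equals $P_m(s_{i_1},\dots,s_{i_m})T^4+R_m(s_{i_1},\dots,s_{i_m})T^3+o(T^3)$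 as $T\to\infty$, for some coefficients $P_m,R_m$. *)

theory Defs
  imports Complex_Main "HOL-Library.Landau_Symbols"
begin

(* A finite metric graph: edge set E, endpoint map ep (an edge e joins fst (ep e)
   and snd (ep e)), traversal times len. *)
definition incident :: "'e set \<Rightarrow> ('e \<Rightarrow> 'v \<times> 'v) \<Rightarrow> 'v \<Rightarrow> 'e set" where
  "incident E ep v = {e \<in> E. fst (ep e) = v \<or> snd (ep e) = v}"

definition other_end :: "('e \<Rightarrow> 'v \<times> 'v) \<Rightarrow> 'e \<Rightarrow> 'v \<Rightarrow> 'v" where
  "other_end ep e u = (if u = fst (ep e) then snd (ep e) else fst (ep e))"

(* (e, u, s): a point departs from vertex u along edge e at time s. A point departing
   u along e at time s arrives at w = other end at time s + len e; then one point
   departs w along every edge incident to w (for a valence-one vertex this is the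
   reflection; simultaneous arrivals are merged automatically since this is a set). *)
inductive_set moving :: "'e set \<Rightarrow> ('e \<Rightarrow> 'v \<times> 'v) \<Rightarrow> ('e \<Rightarrow> real) \<Rightarrow> 'v
    \<Rightarrow> ('e \<times> 'v \<times> real) set"
  for E ep len A where
  start: "e \<in> incident E ep A \<Longrightarrow> (e, A, 0) \<in> moving E ep len A"
| step: "(e, u, s) \<in> moving E ep len A \<Longrightarrow> e' \<in> incident E ep (other_end ep e u)
     \<Longrightarrow> (e', other_end ep e u, s + len e) \<in> moving E ep len A"

definition num_points :: "'e set \<Rightarrow> ('e \<Rightarrow> 'v \<times> 'v) \<Rightarrow> ('e \<Rightarrow> real) \<Rightarrow> 'v \<Rightarrow> real \<Rightarrow> nat" where
  "num_points E ep len A T = card {(e, u, s). (e, u, s) \<in> moving E ep len A \<and> s \<le> T \<and> T < s + len e}"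

(* H-junction: interior vertices A = 0, B = 1; leaves 2,3,4,5; edges 1..5, e3 the jumper *)
definition H_edges :: "nat set" where "H_edges = {1..5}"

definition H_ends :: "nat \<Rightarrow> nat \<times> nat" where
  "H_ends e = (if e = 1 then (0, 2) else if e = 2 then (0, 3) else if e = 3 then (0, 1)
               else if e = 4 then (1, 4) else (1, 5))"

definition H'_ends :: "nat \<Rightarrow> nat \<times> nat" where
  "H'_ends e = (if e = 5 then (0, 2) else if e = 2 then (0, 3) else if e = 3 then (0, 1)
               else if e = 4 then (1, 4) else (1, 5))"

definition vA :: nat where "vA = 0"

definition lattice_count :: "(nat \<Rightarrow> real) \<Rightarrow> nat set \<Rightarrow> real \<Rightarrow> nat" where
  "lattice_count t S T = card {n :: nat \<Rightarrow> nat. (\<forall>i. i \<notin> S \<longrightarrow> n i = 0) \<and>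
                                 (\<Sum>i\<in>S. t i * real (n i)) \<le> T}"

definition assumption1 :: "(nat \<Rightarrow> real) \<Rightarrow> bool" where
  "assumption1 t \<longleftrightarrow>
     (\<forall>q :: nat \<Rightarrow> rat. (\<Sum>i=1..5. of_rat (q i) * t i) = 0 \<longrightarrow> (\<forall>i\<in>{1..5}. q i = 0)) \<and>
     (\<forall>S. S \<subseteq> {1..5} \<and> 1 \<le> card S \<and> card S \<le> 4 \<longrightarrow>
        (\<exists>P R :: real. (\<lambda>T. real (lattice_count t S T) - (P * T ^ 4 + R * T ^ 3))
                          \<in> o[at_top](\<lambda>T. T ^ 3)))"

end

theory Submission
  imports Defs "HOL-Real_Asymp.Real_Asymp"
begin

definition LS :: "(nat \<Rightarrow> real) \<Rightarrow> nat set \<Rightarrow> real \<Rightarrow> (nat \<Rightarrow> nat) set" where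
  "LS t S x = {n :: nat \<Rightarrow> nat. (\<forall>i. i \<notin> S \<longrightarrow> n i = 0) \<and> (\<Sum>i\<in>S. t i * real (n i)) \<le> x}"

lemma lattice_count_LS: "lattice_count t S x = card (LS t S x)"
  by (simp add: lattice_count_def LS_def)

lemma finite_LS:
  assumes "finite S" "\<forall>i\<in>S. t i > 0"
  shows "finite (LS t S x)"
proof -
  define K where "K = (\<Sum>i\<in>S. nat \<lfloor>x / t i\<rfloor>)"
  have "LS t S x \<subseteq> {f. \<forall>i. (i \<in> S \<longrightarrow> f i \<in> {0..K}) \<and> (i \<notin> S \<longrightarrow> f i = 0)}"
  proof (intro subsetI CollectI allI conjI impI)
    fix n i assume n: "n \<in> LS t S x" and i: "i \<in> S"
    have nn: "\<forall>j\<in>S. 0 \<le> t j * real (n j)" using assms(2) by (simp add: less_imp_le)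
    have "t i * real (n i) \<le> (\<Sum>j\<in>S. t j * real (n j))"
      by (rule member_le_sum) (use i nn assms(1) in auto)
    also have "\<dots> \<le> x" using n by (simp add: LS_def)
    finally have "real (n i) \<le> x / t i" using assms(2) i by (simp add: field_simps)
    hence "n i \<le> nat \<lfloor>x / t i\<rfloor>" by linarith
    also have "\<dots> \<le> K" unfolding K_def using i assms(1) by (intro member_le_sum) auto
    finally show "n i \<in> {0..K}" by simp
  next
    fix n i assume "n \<in> LS t S x" "i \<notin> S" thus "n i = 0" by (simp add: LS_def)
  qed
  moreover have "finite {f. \<forall>i. (i \<in> S \<longrightarrow> f i \<in> {0..K}) \<and> (i \<notin> S \<longrightarrow> f i = (0::nat))}"
    by (rule finite_set_of_finite_funs) (use assms in auto)
  ultimately show ?thesis by (rule finite_subset)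
qed

lemma LS_neg:
  assumes "\<forall>i\<in>S. t i > 0" "x < 0"
  shows "LS t S x = {}"
proof -
  { fix n assume "n \<in> LS t S x"
    hence "(\<Sum>i\<in>S. t i * real (n i)) \<le> x" by (simp add: LS_def)
    moreover have "0 \<le> (\<Sum>i\<in>S. t i * real (n i))"
      using assms(1) by (intro sum_nonneg) (simp add: less_imp_le)
    ultimately have False using assms(2) by linarith }
  thus ?thesis by blast
qed

lemma LS_split:
  assumes "finite S" "\<forall>i\<in>S. t i > 0" "j \<in> S"
  shows "card (LS t S x) = card (LS t (S - {j}) x) + card (LS t S (x - t j))"
proof -
  have sumj: "(\<Sum>i\<in>S. t i * real (n i)) = t j * real (n j) + (\<Sum>i\<in>S-{j}. t i * real (n i))" for n
    using assms(1,3) by (simp add: sum.remove)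
  have A: "LS t S x = LS t (S - {j}) x \<union> {n\<in>LS t S x. n j \<noteq> 0}"
  proof -
    { fix n assume "n \<in> LS t S x" "n j = 0"
      hence "n \<in> LS t (S - {j}) x" unfolding LS_def using sumj[of n] by auto }
    moreover
    { fix n assume n: "n \<in> LS t (S - {j}) x"
      hence "n j = 0" by (simp add: LS_def)
      hence "n \<in> LS t S x" using n sumj[of n] assms(3) unfolding LS_def by auto }
    ultimately show ?thesis by blast
  qed
  have D: "LS t (S - {j}) x \<inter> {n\<in>LS t S x. n j \<noteq> 0} = {}" by (auto simp: LS_def)
  have B: "bij_betw (\<lambda>n. n(j := n j - 1)) {n\<in>LS t S x. n j \<noteq> 0} (LS t S (x - t j))"
  proof (rule bij_betw_byWitness[where f' = "\<lambda>n. n(j := Suc (n j))"])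
    show "\<forall>a\<in>{n \<in> LS t S x. n j \<noteq> 0}. (a(j := a j - 1))(j := Suc ((a(j := a j - 1)) j)) = a"
      by auto
    show "\<forall>a'\<in>LS t S (x - t j). (a'(j := Suc (a' j)))(j := (a'(j := Suc (a' j))) j - 1) = a'"
      by auto
    show "(\<lambda>n. n(j := n j - 1)) ` {n \<in> LS t S x. n j \<noteq> 0} \<subseteq> LS t S (x - t j)"
    proof
      fix m assume "m \<in> (\<lambda>n. n(j := n j - 1)) ` {n \<in> LS t S x. n j \<noteq> 0}"
      then obtain n where n: "n \<in> LS t S x" "n j \<noteq> 0" and m: "m = n(j := n j - 1)" by auto
      have "(\<Sum>i\<in>S-{j}. t i * real (m i)) = (\<Sum>i\<in>S-{j}. t i * real (n i))"
        using m by (intro sum.cong) auto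
      moreover have "real (m j) = real (n j) - 1" using m n(2) by (simp add: of_nat_diff)
      ultimately show "m \<in> LS t S (x - t j)" using n m sumj[of n] sumj[of m] assms(3)
        unfolding LS_def by (auto simp: algebra_simps)
    qed
    show "(\<lambda>n. n(j := Suc (n j))) ` LS t S (x - t j) \<subseteq> {n \<in> LS t S x. n j \<noteq> 0}"
    proof
      fix m assume "m \<in> (\<lambda>n. n(j := Suc (n j))) ` LS t S (x - t j)"
      then obtain n where n: "n \<in> LS t S (x - t j)" and m: "m = n(j := Suc (n j))" by auto
      have "(\<Sum>i\<in>S-{j}. t i * real (m i)) = (\<Sum>i\<in>S-{j}. t i * real (n i))"
        using m by (intro sum.cong) auto
      moreover have "real (m j) = real (n j) + 1" using m by simp
      ultimately show "m \<in> {n \<in> LS t S x. n j \<noteq> 0}" using n m sumj[of n] sumj[of m] assms(3)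
        unfolding LS_def by (auto simp: algebra_simps)
    qed
  qed
  have fin1: "finite (LS t (S - {j}) x)" using assms by (intro finite_LS) auto
  have fin2: "finite {n\<in>LS t S x. n j \<noteq> 0}" using finite_LS[OF assms(1,2)] by auto
  have "card (LS t S x) = card (LS t (S - {j}) x) + card {n\<in>LS t S x. n j \<noteq> 0}"
    by (subst A, rule card_Un_disjoint[OF fin1 fin2 D])
  also have "card {n\<in>LS t S x. n j \<noteq> 0} = card (LS t S (x - t j))" using bij_betw_same_card[OF B] .
  finally show ?thesis .
qed

lemma pw1:
  fixes x y :: real assumes "0 \<le> y" "y \<le> x"
  shows "x ^ Suc m - y ^ Suc m \<le> real (Suc m) * x ^ m * (x - y)"
proof -
  have "x ^ Suc m - y ^ Suc m = (x - y) * (\<Sum>i<Suc m. y ^ (Suc m - Suc i) * x ^ i)"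
    by (rule power_diff_sumr2)
  also have "(\<Sum>i<Suc m. y ^ (Suc m - Suc i) * x ^ i) \<le> (\<Sum>i<Suc m. x ^ m)"
  proof (rule sum_mono)
    fix i assume "i \<in> {..<Suc m}"
    hence i: "i \<le> m" by simp
    have "y ^ (m - i) \<le> x ^ (m - i)" using assms by (intro power_mono) auto
    hence "y ^ (Suc m - Suc i) * x ^ i \<le> x ^ (m - i) * x ^ i"
      using assms by (intro mult_right_mono) auto
    also have "\<dots> = x ^ m" using i by (simp add: power_add[symmetric])
    finally show "y ^ (Suc m - Suc i) * x ^ i \<le> x ^ m" .
  qed
  hence "(x - y) * (\<Sum>i<Suc m. y ^ (Suc m - Suc i) * x ^ i) \<le> (x - y) * (\<Sum>i<Suc m. x ^ m)"
    using assms by (intro mult_left_mono) auto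
  finally show ?thesis by (simp add: algebra_simps)
qed

lemma pw2:
  fixes x y :: real assumes "0 \<le> y" "y \<le> x"
  shows "real (Suc m) * y ^ m * (x - y) \<le> x ^ Suc m - y ^ Suc m"
proof -
  have "(\<Sum>i<Suc m. y ^ m) \<le> (\<Sum>i<Suc m. y ^ (Suc m - Suc i) * x ^ i)"
  proof (rule sum_mono)
    fix i assume "i \<in> {..<Suc m}"
    hence i: "i \<le> m" by simp
    have "y ^ m = y ^ (m - i) * y ^ i" using i by (simp add: power_add[symmetric])
    also have "\<dots> \<le> y ^ (m - i) * x ^ i"
      using assms by (intro mult_left_mono power_mono) auto
    finally show "y ^ m \<le> y ^ (Suc m - Suc i) * x ^ i" by simp
  qed
  hence "(x - y) * (\<Sum>i<Suc m. y ^ m) \<le> (x - y) * (\<Sum>i<Suc m. y ^ (Suc m - Suc i) * x ^ i)"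
    using assms by (intro mult_left_mono) auto
  also have "\<dots> = x ^ Suc m - y ^ Suc m" by (rule power_diff_sumr2[symmetric])
  finally show ?thesis by (simp add: algebra_simps)
qed

lemma LS_bounds:
  assumes "finite S" "\<forall>i\<in>S. t i > 0"
  shows "\<forall>x\<ge>0. x ^ card S \<le> fact (card S) * (\<Prod>i\<in>S. t i) * real (card (LS t S x)) \<and>
          fact (card S) * (\<Prod>i\<in>S. t i) * real (card (LS t S x)) \<le> (x + (\<Sum>i\<in>S. t i)) ^ card S"
  using assms
proof (induction S rule: finite_induct)
  case empty
  have "LS t {} x = {\<lambda>_. 0}" if "x \<ge> 0" for x using that by (auto simp: LS_def)
  thus ?case by simp
next
  case (insert j S')
  define m where "m = card S'"
  define a where "a = fact m * (\<Prod>i\<in>S'. t i)"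
  define \<sigma> where "\<sigma> = (\<Sum>i\<in>S'. t i)"
  define tj where "tj = t j"
  have tj: "tj > 0" using insert by (simp add: tj_def)
  have a: "a > 0" unfolding a_def using insert by (intro mult_pos_pos prod_pos) auto
  have \<sigma>: "\<sigma> \<ge> 0" unfolding \<sigma>_def using insert by (intro sum_nonneg) (auto simp: less_imp_le)
  have IH: "\<And>x. x \<ge> 0 \<Longrightarrow> x ^ m \<le> a * real (card (LS t S' x)) \<and> a * real (card (LS t S' x)) \<le> (x + \<sigma>) ^ m"
    using insert by (auto simp: m_def a_def \<sigma>_def)
  have cardS: "card (insert j S') = Suc m" using insert by (simp add: m_def)
  have K: "fact (card (insert j S')) * (\<Prod>i\<in>insert j S'. t i) = real (Suc m) * tj * a"
    using insert by (simp add: cardS a_def tj_def algebra_simps)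
  have sig: "(\<Sum>i\<in>insert j S'. t i) = \<sigma> + tj" using insert by (simp add: \<sigma>_def tj_def)
  have split: "card (LS t (insert j S') x) = card (LS t S' x) + card (LS t (insert j S') (x - tj))" for x
    using LS_split[of "insert j S'" t j x] insert by (simp add: tj_def)
  let ?L = "\<lambda>x. real (card (LS t (insert j S') x))"
  have base: "x ^ Suc m \<le> real (Suc m) * tj * a * ?L x \<and> real (Suc m) * tj * a * ?L x \<le> (x + \<sigma> + tj) ^ Suc m"
    if x: "0 \<le> x \<and> x < real (Suc 0) * tj" for x
  proof -
      have "LS t (insert j S') (x - tj) = {}" using insert x by (intro LS_neg) auto
      hence Lx: "?L x = real (card (LS t S' x))" using split[of x] by simp
      have ih: "x ^ m \<le> a * real (card (LS t S' x))" "a * real (card (LS t S' x)) \<le> (x + \<sigma>) ^ m"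
        using IH[of x] x by auto
      have "x ^ Suc m = x * x ^ m" by simp
      also have "\<dots> \<le> tj * x ^ m" using x by (intro mult_right_mono) auto
      also have "\<dots> \<le> real (Suc m) * tj * x ^ m" using tj x by (simp add: algebra_simps)
      also have "\<dots> \<le> real (Suc m) * tj * (a * real (card (LS t S' x)))"
        using ih(1) tj by (intro mult_left_mono) auto
      finally have lo: "x ^ Suc m \<le> real (Suc m) * tj * a * ?L x" using Lx by (simp add: algebra_simps)
      have "real (Suc m) * tj * a * ?L x = real (Suc m) * tj * (a * real (card (LS t S' x)))"
        using Lx by (simp add: algebra_simps)
      also have "\<dots> \<le> real (Suc m) * tj * (x + \<sigma>) ^ m" using ih(2) tj by (intro mult_left_mono) auto
      also have "\<dots> = real (Suc m) * (x + \<sigma>) ^ m * ((x + \<sigma> + tj) - (x + \<sigma>))" by (simp add: algebra_simps)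
      also have "\<dots> \<le> (x + \<sigma> + tj) ^ Suc m - (x + \<sigma>) ^ Suc m" using x \<sigma> tj by (intro pw2) auto
      also have "\<dots> \<le> (x + \<sigma> + tj) ^ Suc m" using x \<sigma> by simp
      finally show "x ^ Suc m \<le> real (Suc m) * tj * a * ?L x \<and> real (Suc m) * tj * a * ?L x \<le> (x + \<sigma> + tj) ^ Suc m"
        using lo by simp
  qed
  have main: "\<forall>x. 0 \<le> x \<and> x < real (Suc N) * tj \<longrightarrow>
      x ^ Suc m \<le> real (Suc m) * tj * a * ?L x \<and> real (Suc m) * tj * a * ?L x \<le> (x + \<sigma> + tj) ^ Suc m" for N
  proof (induction N)
    case 0
    show ?case using base by blast
  next
    case (Suc N)
    show ?case
    proof (intro allI impI)
      fix x assume x: "0 \<le> x \<and> x < real (Suc (Suc N)) * tj"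
      show "x ^ Suc m \<le> real (Suc m) * tj * a * ?L x \<and> real (Suc m) * tj * a * ?L x \<le> (x + \<sigma> + tj) ^ Suc m"
      proof (cases "x < tj")
        case True
        thus ?thesis using base x by simp
      next
        case False
        have x': "0 \<le> x - tj \<and> x - tj < real (Suc N) * tj" using False x by (auto simp: algebra_simps)
        have eqx: "x - tj + \<sigma> + tj = x + \<sigma>" by simp
        note h = Suc.IH[rule_format, OF x', unfolded eqx]
        have ih2: "(x - tj) ^ Suc m \<le> real (Suc m) * tj * a * ?L (x - tj)"
            "real (Suc m) * tj * a * ?L (x - tj) \<le> (x + \<sigma>) ^ Suc m"
          using h by auto
        have ih: "x ^ m \<le> a * real (card (LS t S' x))" "a * real (card (LS t S' x)) \<le> (x + \<sigma>) ^ m"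
          using IH[of x] x by auto
        have eq: "real (Suc m) * tj * a * ?L x = real (Suc m) * tj * (a * real (card (LS t S' x)))
                     + real (Suc m) * tj * a * ?L (x - tj)"
          using split[of x] by (simp add: algebra_simps)
        have "x ^ Suc m \<le> real (Suc m) * x ^ m * (x - (x - tj)) + (x - tj) ^ Suc m"
          using pw1[of "x - tj" x m] x' tj by simp
        also have "\<dots> \<le> real (Suc m) * tj * (a * real (card (LS t S' x))) + real (Suc m) * tj * a * ?L (x - tj)"
        proof (intro add_mono)
          have "real (Suc m) * tj * x ^ m \<le> real (Suc m) * tj * (a * real (card (LS t S' x)))"
            using ih(1) tj by (intro mult_left_mono) auto
          thus "real (Suc m) * x ^ m * (x - (x - tj)) \<le> real (Suc m) * tj * (a * real (card (LS t S' x)))"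
            by (simp add: algebra_simps)
        qed (use ih2(1) in auto)
        finally have lo: "x ^ Suc m \<le> real (Suc m) * tj * a * ?L x" using eq by simp
        have "real (Suc m) * tj * a * ?L x \<le> real (Suc m) * tj * (x + \<sigma>) ^ m + (x + \<sigma>) ^ Suc m"
        proof -
          have "real (Suc m) * tj * (a * real (card (LS t S' x))) \<le> real (Suc m) * tj * (x + \<sigma>) ^ m"
            using ih(2) tj by (intro mult_left_mono) auto
          thus ?thesis using eq ih2(2) by linarith
        qed
        also have "\<dots> = real (Suc m) * (x + \<sigma>) ^ m * ((x + \<sigma> + tj) - (x + \<sigma>)) + (x + \<sigma>) ^ Suc m"
          by (simp add: algebra_simps)
        also have "\<dots> \<le> (x + \<sigma> + tj) ^ Suc m"
          using pw2[of "x + \<sigma>" "x + \<sigma> + tj" m] x \<sigma> tj by simp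
        finally show ?thesis using lo by simp
      qed
    qed
  qed
  show ?case
  proof (intro allI impI)
    fix x :: real assume x: "x \<ge> 0"
    obtain N :: nat where "x / tj < real N" using reals_Archimedean2 by blast
    hence "x < real (Suc N) * tj" using tj by (simp add: field_simps)
    thus "x ^ card (insert j S') \<le> fact (card (insert j S')) * (\<Prod>i\<in>insert j S'. t i) * ?L x \<and>
          fact (card (insert j S')) * (\<Prod>i\<in>insert j S'. t i) * ?L x \<le> (x + (\<Sum>i\<in>insert j S'. t i)) ^ card (insert j S')"
      using main[of N] x unfolding cardS K[unfolded cardS] sig by (simp add: add.assoc)
  qed
qed

lemma o_y2: "(\<lambda>T::real. ((T - c)/2)^2) \<in> o(\<lambda>T. T^3)" by real_asymp
lemma o_y1: "(\<lambda>T::real. ((T - c)/2)) \<in> o(\<lambda>T. T^3)" by real_asymp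
lemma o_T2: "(\<lambda>T::real. T^2) \<in> o(\<lambda>T. T^3)" by real_asymp
lemma o_T1: "(\<lambda>T::real. T) \<in> o(\<lambda>T. T^3)" by real_asymp
lemma o_xc: "(\<lambda>T::real. T - c) \<in> o(\<lambda>T. T^3)" by real_asymp
lemma o_1: "(\<lambda>T::real. 1) \<in> o(\<lambda>T. T^3)" by real_asymp
lemma o_const: "(\<lambda>T::real. c) \<in> o(\<lambda>T. T^3)"
  using o_1 landau_o.small.cmult_in_iff[of c "\<lambda>_. 1"] by (cases "c = 0") auto

lemma P4_val:
  assumes fin: "finite S" and pos: "\<forall>i\<in>S. t i > 0" and c4: "card S = 4"
    and g: "(\<lambda>x. real (lattice_count t S x) - (P * x ^ 4 + R * x ^ 3)) \<in> o(\<lambda>x. x ^ 3)"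
  shows "P = 1 / (24 * (\<Prod>i\<in>S. t i))"
proof -
  define K where "K = 24 * (\<Prod>i\<in>S. t i)"
  define \<sigma> where "\<sigma> = (\<Sum>i\<in>S. t i)"
  have K: "K > 0" unfolding K_def using pos by (intro mult_pos_pos prod_pos) auto
  let ?F = "\<lambda>x. real (lattice_count t S x)"
  let ?g = "\<lambda>x. real (lattice_count t S x) - (P * x ^ 4 + R * x ^ 3)"
  have "(\<lambda>x::real. x ^ 3) \<in> O(\<lambda>x. x ^ 4)" by real_asymp
  from landau_o.small_big_trans[OF g this] have "((\<lambda>x. ?g x / x ^ 4) \<longlongrightarrow> 0) at_top"
    by (rule smalloD_tendsto)
  moreover have "((\<lambda>x::real. R / x) \<longlongrightarrow> 0) at_top" by real_asymp
  ultimately have "((\<lambda>x. ?g x / x ^ 4 + (P + R / x)) \<longlongrightarrow> 0 + (P + 0)) at_top"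
    by (intro tendsto_intros)
  moreover have "eventually (\<lambda>x. ?g x / x ^ 4 + (P + R / x) = ?F x / x ^ 4) at_top"
    using eventually_gt_at_top[of 0] by eventually_elim (simp add: field_simps power_eq_if)
  ultimately have lim1: "((\<lambda>x. ?F x / x ^ 4) \<longlongrightarrow> P) at_top"
    by (simp add: tendsto_cong)
  have bnd: "\<And>x. x \<ge> 0 \<Longrightarrow> x ^ 4 \<le> K * ?F x \<and> K * ?F x \<le> (x + \<sigma>) ^ 4"
    using LS_bounds[OF fin pos] c4 by (simp add: K_def \<sigma>_def lattice_count_LS fact_numeral)
  have "((\<lambda>x::real. (x + \<sigma>) ^ 4 / x ^ 4) \<longlongrightarrow> 1) at_top" by real_asymp
  hence up: "((\<lambda>x::real. (x + \<sigma>) ^ 4 / x ^ 4 / K) \<longlongrightarrow> 1 / K) at_top"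
    by (intro tendsto_intros) (use K in auto)
  have lim2: "((\<lambda>x. ?F x / x ^ 4) \<longlongrightarrow> 1 / K) at_top"
  proof (rule tendsto_sandwich[OF _ _ tendsto_const up])
    show "eventually (\<lambda>x. 1 / K \<le> ?F x / x ^ 4) at_top"
      using eventually_gt_at_top[of 0]
    proof eventually_elim
      case (elim x)
      thus ?case using bnd[of x] K by (simp add: field_simps)
    qed
    show "eventually (\<lambda>x. ?F x / x ^ 4 \<le> (x + \<sigma>) ^ 4 / x ^ 4 / K) at_top"
      using eventually_gt_at_top[of 0]
    proof eventually_elim
      case (elim x)
      thus ?case using bnd[of x] K by (simp add: field_simps)
    qed
  qed
  from tendsto_unique[OF _ lim1 lim2] show ?thesis by (simp add: K_def)
qed

lemma shift4:
  fixes F :: "real \<Rightarrow> real"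
  assumes g: "(\<lambda>x. F x - (P * x ^ 4 + R * x ^ 3)) \<in> o(\<lambda>x. x ^ 3)"
  shows "(\<lambda>T. F ((T - c) / 2 - h) - F ((T - c) / 2) + P * h * T ^ 3 / 2) \<in> o(\<lambda>T. T ^ 3)"
proof -
  define G where "G = (\<lambda>x. F x - (P * x ^ 4 + R * x ^ 3))"
  have lim: "filterlim (\<lambda>T::real. (T - c)/2 - h) at_top at_top" by real_asymp
  have "(\<lambda>T. G ((T - c)/2 - h)) \<in> o(\<lambda>T. ((T - c)/2 - h) ^ 3)"
    using landau_o.small.compose[OF g[folded G_def] lim] .
  moreover have "(\<lambda>T::real. ((T - c)/2 - h) ^ 3) \<in> O(\<lambda>T. T ^ 3)" by real_asymp
  ultimately have G1: "(\<lambda>T. G ((T - c)/2 - h)) \<in> o(\<lambda>T. T ^ 3)"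
    by (rule landau_o.small_big_trans)
  have lim': "filterlim (\<lambda>T::real. (T - c)/2) at_top at_top" by real_asymp
  have "(\<lambda>T. G ((T - c)/2)) \<in> o(\<lambda>T. ((T - c)/2) ^ 3)"
    using landau_o.small.compose[OF g[folded G_def] lim'] .
  moreover have "(\<lambda>T::real. ((T - c)/2) ^ 3) \<in> O(\<lambda>T. T ^ 3)" by real_asymp
  ultimately have G2: "(\<lambda>T. G ((T - c)/2)) \<in> o(\<lambda>T. T ^ 3)"
    by (rule landau_o.small_big_trans)
  have poly: "(\<lambda>T. P*6*h^2*((T - c)/2)^2 - P*4*h^3*((T - c)/2) + P*h^4 + (P*h*3*c/2)*T^2
      - (P*h*3*c^2/2)*T + P*h*c^3/2 - 3*R*h*((T - c)/2)^2 + 3*R*h^2*((T - c)/2) - R*h^3) \<in> o(\<lambda>T. T ^ 3)"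
    by (intro sum_in_smallo o_const) (simp_all add: o_y2 o_y1 o_T2 o_T1 o_xc)
  have eq: "F ((T - c) / 2 - h) - F ((T - c) / 2) + P * h * T ^ 3 / 2 =
      G ((T - c)/2 - h) - G ((T - c)/2) + (P*6*h^2*((T - c)/2)^2 - P*4*h^3*((T - c)/2) + P*h^4 + (P*h*3*c/2)*T^2
      - (P*h*3*c^2/2)*T + P*h*c^3/2 - 3*R*h*((T - c)/2)^2 + 3*R*h^2*((T - c)/2) - R*h^3)" for T
    unfolding G_def by (simp add: power2_eq_square power3_eq_cube power4_eq_xxxx algebra_simps divide_simps)
  show ?thesis unfolding eq
    by (intro sum_in_smallo G1 G2 poly)
qed

lemma small2:
  assumes fin: "finite S" and pos: "\<forall>i\<in>S. t i > 0" and c2: "card S \<le> 2"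
  shows "(\<lambda>T. real (lattice_count t S (T / 2 + c))) \<in> o(\<lambda>T. T ^ 3)"
proof -
  define K where "K = fact (card S) * (\<Prod>i\<in>S. t i)"
  define \<sigma> where "\<sigma> = (\<Sum>i\<in>S. t i)"
  have K: "K > 0" unfolding K_def using pos by (intro mult_pos_pos prod_pos) auto
  have \<sigma>: "\<sigma> \<ge> 0" unfolding \<sigma>_def using pos by (intro sum_nonneg) (auto simp: less_imp_le)
  have pw: "(\<lambda>T::real. (T / 2 + c + \<sigma>) ^ card S) \<in> o(\<lambda>T. T ^ 3)"
  proof -
    have "card S = 0 \<or> card S = 1 \<or> card S = 2" using c2 by auto
    moreover have "(\<lambda>T::real. (T / 2 + c + \<sigma>) ^ 0) \<in> o(\<lambda>T. T ^ 3)" by real_asymp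
    moreover have "(\<lambda>T::real. (T / 2 + c + \<sigma>) ^ 1) \<in> o(\<lambda>T. T ^ 3)" by real_asymp
    moreover have "(\<lambda>T::real. (T / 2 + c + \<sigma>) ^ 2) \<in> o(\<lambda>T. T ^ 3)" by real_asymp
    ultimately show ?thesis by auto
  qed
  have "(\<lambda>T. real (lattice_count t S (T / 2 + c))) \<in> O(\<lambda>T::real. (T / 2 + c + \<sigma>) ^ card S)"
  proof (rule bigoI[where c = "1 / K"])
    have "eventually (\<lambda>T::real. T / 2 + c \<ge> 0) at_top" by real_asymp
    thus "eventually (\<lambda>T. norm (real (lattice_count t S (T / 2 + c))) \<le> 1 / K * norm ((T / 2 + c + \<sigma>) ^ card S)) at_top"
    proof eventually_elim
      case (elim T)
      have "K * real (lattice_count t S (T / 2 + c)) \<le> (T / 2 + c + \<sigma>) ^ card S"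
        using LS_bounds[OF fin pos, rule_format, OF elim] by (simp add: K_def \<sigma>_def lattice_count_LS)
      moreover have "0 \<le> T / 2 + c + \<sigma>" using elim \<sigma> by simp
      ultimately show ?case using K by (simp add: field_simps)
    qed
  qed
  thus ?thesis using pw by (rule landau_o.big_small_trans)
qed

definition Gends :: "nat \<Rightarrow> nat \<Rightarrow> nat \<times> nat" where
  "Gends a e = (if e = a then (0, 2) else if e = 2 then (0, 3) else if e = 3 then (0, 1)
               else if e = 4 then (1, 4) else (1, 5))"

lemma H_Gends: "H_ends = Gends 1" "H'_ends = Gends 5"
  by (auto simp: fun_eq_iff H_ends_def H'_ends_def Gends_def)

definition okp :: "nat \<Rightarrow> nat \<Rightarrow> bool" where "okp a f \<longleftrightarrow> (a = 1 \<and> f = 5) \<or> (a = 5 \<and> f = 1)"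

lemma inc_G:
  assumes "okp a f"
  shows "incident H_edges (Gends a) u =
    (if u = 0 then {a, 2, 3} else if u = 1 then {3, 4, f} else if u = 2 then {a}
     else if u = 3 then {2} else if u = 4 then {4} else if u = 5 then {f} else {})"
  using assms unfolding okp_def incident_def H_edges_def Gends_def
  by (elim disjE) (auto split: if_splits)

lemma oth_G:
  assumes "okp a f"
  shows "other_end (Gends a) a 0 = 2" "other_end (Gends a) 2 0 = 3" "other_end (Gends a) 3 0 = 1"
    "other_end (Gends a) 3 1 = 0" "other_end (Gends a) 4 1 = 4" "other_end (Gends a) f 1 = 5"
    "other_end (Gends a) a 2 = 0" "other_end (Gends a) 2 3 = 0" "other_end (Gends a) 4 4 = 1"
    "other_end (Gends a) f 5 = 1"
  using assms unfolding okp_def other_end_def Gends_def by auto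

inductive_set RS :: "(nat \<Rightarrow> nat \<times> nat) \<Rightarrow> (nat \<times> (nat \<Rightarrow> nat)) set" for ep where
  base: "(0, \<lambda>_. 0) \<in> RS ep"
| step: "(u, n) \<in> RS ep \<Longrightarrow> e \<in> incident H_edges ep u \<Longrightarrow> (other_end ep e u, n(e := Suc (n e))) \<in> RS ep"

definition W :: "(nat \<Rightarrow> real) \<Rightarrow> (nat \<Rightarrow> nat) \<Rightarrow> real" where
  "W t n = (\<Sum>i\<in>{1..5}. t i * real (n i))"

lemma W_expand: "W t n = t 1 * real (n 1) + t 2 * real (n 2) + t 3 * real (n 3) + t 4 * real (n 4) + t 5 * real (n 5)"
proof -
  have "{1..5::nat} = {1,2,3,4,5}" by auto
  thus ?thesis unfolding W_def by (simp add: algebra_simps)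
qed

lemma W_step: "e \<in> {1..5} \<Longrightarrow> W t (n(e := Suc (n e))) = W t n + t e"
proof -
  assume "e \<in> {1..5}"
  hence "e = 1 \<or> e = 2 \<or> e = 3 \<or> e = 4 \<or> e = 5" by auto
  thus ?thesis unfolding W_expand by (elim disjE) (auto simp: algebra_simps)
qed

lemma inc_sub: "incident H_edges ep u \<subseteq> {1..5}"
  by (auto simp: incident_def H_edges_def)

lemma moving_RS:
  "(e, u, s) \<in> moving H_edges ep t 0 \<longleftrightarrow> (\<exists>n. (u, n) \<in> RS ep \<and> e \<in> incident H_edges ep u \<and> s = W t n)"
proof
  assume "(e, u, s) \<in> moving H_edges ep t 0"
  thus "\<exists>n. (u, n) \<in> RS ep \<and> e \<in> incident H_edges ep u \<and> s = W t n"
  proof (induction rule: moving.induct)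
    case (start e)
    thus ?case by (intro exI[of _ "\<lambda>_. 0"]) (auto intro: RS.base simp: W_def)
  next
    case (step e u s e')
    then obtain n where n: "(u, n) \<in> RS ep" "e \<in> incident H_edges ep u" "s = W t n" by auto
    have "e \<in> {1..5}" using n(2) inc_sub[of ep u] by blast
    hence "W t (n(e := Suc (n e))) = s + t e" by (simp add: W_step n(3))
    moreover have "(other_end ep e u, n(e := Suc (n e))) \<in> RS ep" by (rule RS.step[OF n(1) n(2)])
    ultimately show ?case using step.hyps(2) by (metis)
  qed
next
  assume "\<exists>n. (u, n) \<in> RS ep \<and> e \<in> incident H_edges ep u \<and> s = W t n"
  then obtain n where n: "(u, n) \<in> RS ep" "e \<in> incident H_edges ep u" "s = W t n" by auto
  have "\<forall>e. e \<in> incident H_edges ep u \<longrightarrow> (e, u, W t n) \<in> moving H_edges ep t 0" using n(1)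
  proof (induction rule: RS.induct)
    case base
    thus ?case by (auto intro: moving.start simp: W_def)
  next
    case (step u n e)
    show ?case
    proof (intro allI impI)
      fix e' assume e': "e' \<in> incident H_edges ep (other_end ep e u)"
      have "(e, u, W t n) \<in> moving H_edges ep t 0" using step by blast
      from moving.step[OF this e'] have "(e', other_end ep e u, W t n + t e) \<in> moving H_edges ep t 0" .
      moreover have "e \<in> {1..5}" using step.hyps(2) inc_sub[of ep u] by blast
      ultimately show "(e', other_end ep e u, W t (n(e := Suc (n e)))) \<in> moving H_edges ep t 0"
        by (simp add: W_step)
    qed
  qed
  thus "(e, u, s) \<in> moving H_edges ep t 0" using n by auto
qed

definition par :: "nat \<Rightarrow> nat \<Rightarrow> nat \<Rightarrow> nat set" where
  "par a f u = (if u = 0 then {} else if u = 1 then {3} else if u = 2 then {a} else if u = 3 then {2}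
                else if u = 4 then {3, 4} else {3, f})"

definition Cex :: "nat \<Rightarrow> nat \<Rightarrow> nat \<Rightarrow> (nat \<Rightarrow> nat) \<Rightarrow> bool" where
  "Cex a f u n \<longleftrightarrow> u \<le> 5 \<and> (\<forall>i. (i = 0 \<or> 5 < i) \<longrightarrow> n i = 0) \<and>
     (odd (n 1) \<longleftrightarrow> 1 \<in> par a f u) \<and> (odd (n 2) \<longleftrightarrow> 2 \<in> par a f u) \<and> (odd (n 3) \<longleftrightarrow> 3 \<in> par a f u) \<and>
     (odd (n 4) \<longleftrightarrow> 4 \<in> par a f u) \<and> (odd (n 5) \<longleftrightarrow> 5 \<in> par a f u) \<and>
     (n 3 = 0 \<longrightarrow> n 4 = 0 \<and> n f = 0)"

lemma par_simps: "par a f 0 = {}" "par a f 1 = {3}" "par a f (Suc 0) = {3}" "par a f 2 = {a}" "par a f 3 = {2}"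
  "par a f 4 = {3, 4}" "par a f 5 = {3, f}"
  by (simp_all add: par_def)

lemma Cex_step_gen:
  assumes "Cex a f u n" "e = 1 \<or> e = 2 \<or> e = 3 \<or> e = 4 \<or> e = 5" "w \<le> 5"
    "(1 \<in> par a f w \<longleftrightarrow> (if 1 = e then 1 \<notin> par a f u else 1 \<in> par a f u))"
    "(2 \<in> par a f w \<longleftrightarrow> (if 2 = e then 2 \<notin> par a f u else 2 \<in> par a f u))"
    "(3 \<in> par a f w \<longleftrightarrow> (if 3 = e then 3 \<notin> par a f u else 3 \<in> par a f u))"
    "(4 \<in> par a f w \<longleftrightarrow> (if 4 = e then 4 \<notin> par a f u else 4 \<in> par a f u))"
    "(5 \<in> par a f w \<longleftrightarrow> (if 5 = e then 5 \<notin> par a f u else 5 \<in> par a f u))"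
    "e = 3 \<or> n 3 \<noteq> 0 \<or> (e \<noteq> 4 \<and> e \<noteq> f)"
  shows "Cex a f w (n(e := Suc (n e)))"
  using assms(2)
proof (elim disjE)
  assume e: "e = 1" show ?thesis using assms(1,3-) unfolding e Cex_def by auto
next
  assume e: "e = 2" show ?thesis using assms(1,3-) unfolding e Cex_def by auto
next
  assume e: "e = 3" show ?thesis using assms(1,3-) unfolding e Cex_def by auto
next
  assume e: "e = 4" show ?thesis using assms(1,3-) unfolding e Cex_def by auto
next
  assume e: "e = 5" show ?thesis using assms(1,3-) unfolding e Cex_def by auto
qed

lemma RS_Cex:
  assumes ok: "okp a f" and r: "(u, n) \<in> RS (Gends a)"
  shows "Cex a f u n"
  using r
proof (induction rule: RS.induct)
  case base
  thus ?case by (simp add: Cex_def par_def)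
next
  case (step u n e)
  from step.hyps(2) have e: "e \<in> incident H_edges (Gends a) u" .
  have u: "u \<le> 5" using step.IH by (simp add: Cex_def)
  have n3: "n 3 \<noteq> 0" if "u \<in> {1,4,5}"
  proof -
    have "3 \<in> par a f u" using that by (auto simp: par_def)
    hence "odd (n 3)" using step.IH unfolding Cex_def by blast
    thus ?thesis by (cases "n 3") auto
  qed
  have af: "a \<noteq> 3 \<and> a \<noteq> 4 \<and> a \<noteq> f \<and> a \<noteq> 2 \<and> f \<noteq> 2 \<and> f \<noteq> 3 \<and> f \<noteq> 4 \<and> (a = 1 \<or> a = 5) \<and> (f = 1 \<or> f = 5)"
    using ok by (auto simp: okp_def)
  have "u = 0 \<or> u = 1 \<or> u = 2 \<or> u = 3 \<or> u = 4 \<or> u = 5" using u by auto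
  thus ?case
  proof (elim disjE)
    assume u: "u = 0"
    hence "e = a \<or> e = 2 \<or> e = 3" using e inc_G[OF ok] by auto
    thus ?thesis
    proof (elim disjE)
      assume e: "e = a"
      show ?thesis unfolding u e oth_G[OF ok]
        apply (rule Cex_step_gen[of a f 0 n a])
        using step.IH u e af n3 by ((simp_all add: par_simps), (auto simp: par_simps)?)
    next
      assume e: "e = 2"
      show ?thesis unfolding u e oth_G[OF ok]
        apply (rule Cex_step_gen[of a f 0 n 2])
        using step.IH u e af n3 by ((simp_all add: par_simps), (auto simp: par_simps)?)
    next
      assume e: "e = 3"
      show ?thesis unfolding u e oth_G[OF ok]
        apply (rule Cex_step_gen[of a f 0 n 3])
        using step.IH u e af n3 by ((simp_all add: par_simps), (auto simp: par_simps)?)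
    qed
  next
    assume u: "u = 1"
    hence "e = 3 \<or> e = 4 \<or> e = f" using e inc_G[OF ok] by auto
    thus ?thesis
    proof (elim disjE)
      assume e: "e = 3"
      show ?thesis unfolding u e oth_G[OF ok]
        apply (rule Cex_step_gen[of a f 1 n 3])
        using step.IH u e af n3 by ((simp_all add: par_simps), (auto simp: par_simps)?)
    next
      assume e: "e = 4"
      show ?thesis unfolding u e oth_G[OF ok]
        apply (rule Cex_step_gen[of a f 1 n 4])
        using step.IH u e af n3 by ((simp_all add: par_simps), (auto simp: par_simps)?)
    next
      assume e: "e = f"
      show ?thesis unfolding u e oth_G[OF ok]
        apply (rule Cex_step_gen[of a f 1 n f])
        using step.IH u e af n3 by ((simp_all add: par_simps), (auto simp: par_simps)?)
    qed
  next
    assume u: "u = 2"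
    hence e: "e = a" using e inc_G[OF ok] by auto
    show ?thesis unfolding u e oth_G[OF ok]
        apply (rule Cex_step_gen[of a f 2 n a])
        using step.IH u e af n3 by ((simp_all add: par_simps), (auto simp: par_simps)?)
  next
    assume u: "u = 3"
    hence e: "e = 2" using e inc_G[OF ok] by auto
    show ?thesis unfolding u e oth_G[OF ok]
        apply (rule Cex_step_gen[of a f 3 n 2])
        using step.IH u e af n3 by ((simp_all add: par_simps), (auto simp: par_simps)?)
  next
    assume u: "u = 4"
    hence e: "e = 4" using e inc_G[OF ok] by auto
    show ?thesis unfolding u e oth_G[OF ok]
        apply (rule Cex_step_gen[of a f 4 n 4])
        using step.IH u e af n3 by ((simp_all add: par_simps), (auto simp: par_simps)?)
  next
    assume u: "u = 5"
    hence e: "e = f" using e inc_G[OF ok] by auto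
    show ?thesis unfolding u e oth_G[OF ok]
        apply (rule Cex_step_gen[of a f 5 n f])
        using step.IH u e af n3 by ((simp_all add: par_simps), (auto simp: par_simps)?)
  qed
qed

lemma parity_j:
  fixes n :: "nat \<Rightarrow> nat"
  assumes "odd (n j) \<longleftrightarrow> j \<in> P" "j \<in> Q \<longleftrightarrow> (if j = e then j \<notin> P else j \<in> P)" "n e \<noteq> 0"
  shows "odd ((n(e := n e - 1)) j) \<longleftrightarrow> j \<in> Q"
proof (cases "j = e")
  case True
  have o: "odd (n e - 1) \<longleftrightarrow> \<not> odd (n e)" using assms(3) by (cases "n e") auto
  have "(n(e := n e - 1)) j = n e - 1" using True by simp
  moreover have "j \<in> Q \<longleftrightarrow> j \<notin> P" using assms(2) True by simp
  moreover have "odd (n e) \<longleftrightarrow> j \<in> P" using assms(1) True by simp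
  ultimately show ?thesis using o by simp
next
  case False
  hence "(n(e := n e - 1)) j = n j" by simp
  moreover have "j \<in> Q \<longleftrightarrow> j \<in> P" using assms(2) False by simp
  ultimately show ?thesis using assms(1) by simp
qed

lemma Cex_dec_gen:
  assumes C: "Cex a f u n" and e: "e = 1 \<or> e = 2 \<or> e = 3 \<or> e = 4 \<or> e = 5" and ne: "n e \<noteq> 0" and v: "v \<le> 5"
    and q1: "(1 \<in> par a f v \<longleftrightarrow> (if 1 = e then 1 \<notin> par a f u else 1 \<in> par a f u))"
    and q2: "(2 \<in> par a f v \<longleftrightarrow> (if 2 = e then 2 \<notin> par a f u else 2 \<in> par a f u))"
    and q3: "(3 \<in> par a f v \<longleftrightarrow> (if 3 = e then 3 \<notin> par a f u else 3 \<in> par a f u))"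
    and q4: "(4 \<in> par a f v \<longleftrightarrow> (if 4 = e then 4 \<notin> par a f u else 4 \<in> par a f u))"
    and q5: "(5 \<in> par a f v \<longleftrightarrow> (if 5 = e then 5 \<notin> par a f u else 5 \<in> par a f u))"
    and cn: "(n(e := n e - 1)) 3 = 0 \<longrightarrow> (n(e := n e - 1)) 4 = 0 \<and> (n(e := n e - 1)) f = 0"
  shows "Cex a f v (n(e := n e - 1))"
proof -
  have p1: "odd (n 1) \<longleftrightarrow> 1 \<in> par a f u" using C unfolding Cex_def by - (elim conjE, assumption)
  have p2: "odd (n 2) \<longleftrightarrow> 2 \<in> par a f u" using C unfolding Cex_def by - (elim conjE, assumption)
  have p3: "odd (n 3) \<longleftrightarrow> 3 \<in> par a f u" using C unfolding Cex_def by - (elim conjE, assumption)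
  have p4: "odd (n 4) \<longleftrightarrow> 4 \<in> par a f u" using C unfolding Cex_def by - (elim conjE, assumption)
  have p5: "odd (n 5) \<longleftrightarrow> 5 \<in> par a f u" using C unfolding Cex_def by - (elim conjE, assumption)
  note p = p1 p2 p3 p4 p5
  have supp: "\<forall>i. (i = 0 \<or> 5 < i) \<longrightarrow> n i = 0" using C unfolding Cex_def by - (elim conjE, assumption)
  have supp': "\<forall>i. (i = 0 \<or> 5 < i) \<longrightarrow> (n(e := n e - 1)) i = 0"
  proof (intro allI impI)
    fix i :: nat assume i: "i = 0 \<or> 5 < i"
    hence "i \<noteq> e" using e by presburger
    thus "(n(e := n e - 1)) i = 0" using supp[rule_format, OF i] by simp
  qed
  show ?thesis unfolding Cex_def
    using v supp' cn parity_j[OF p(1) q1 ne] parity_j[OF p(2) q2 ne] parity_j[OF p(3) q3 ne]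
      parity_j[OF p(4) q4 ne] parity_j[OF p(5) q5 ne]
    by (intro conjI) assumption+
qed

lemma sum_dec:
  fixes n :: "nat \<Rightarrow> nat"
  assumes "e = 1 \<or> e = 2 \<or> e = 3 \<or> e = 4 \<or> e = 5" "n e \<noteq> (0::nat)"
  shows "(n(e := n e - 1)) 1 + (n(e := n e - 1)) 2 + (n(e := n e - 1)) 3 + (n(e := n e - 1)) 4 + (n(e := n e - 1)) 5
         < n 1 + n 2 + n 3 + n 4 + n 5"
  using assms by (elim disjE) auto

lemma RS_pred:
  assumes "(v, m) \<in> RS ep" "e \<in> incident H_edges ep v" "other_end ep e v = u" "n e \<noteq> 0" "m = n(e := n e - 1)"
  shows "(u, n) \<in> RS ep"
proof -
  have "m(e := Suc (m e)) = n" using assms(4,5) by auto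
  thus ?thesis using RS.step[OF assms(1,2)] assms(3) by simp
qed

lemma Cex_RS:
  assumes ok: "okp a f"
  shows "Cex a f u n \<Longrightarrow> (u, n) \<in> RS (Gends a)"
proof (induction "n 1 + n 2 + n 3 + n 4 + n 5" arbitrary: u n rule: less_induct)
  case less
  have C: "Cex a f u n" by fact
  have af: "a \<noteq> 3 \<and> a \<noteq> 4 \<and> a \<noteq> f \<and> a \<noteq> 2 \<and> f \<noteq> 2 \<and> f \<noteq> 3 \<and> f \<noteq> 4 \<and> (a = 1 \<or> a = 5) \<and> (f = 1 \<or> f = 5)"
    using ok by (auto simp: okp_def)
  have u: "u \<le> 5" using C by (simp add: Cex_def)
  have supp: "\<forall>i. (i = 0 \<or> 5 < i) \<longrightarrow> n i = 0" using C by (simp add: Cex_def)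
  have IH: "(v, n(e := n e - 1)) \<in> RS (Gends a)"
    if "Cex a f v (n(e := n e - 1))" "e = 1 \<or> e = 2 \<or> e = 3 \<or> e = 4 \<or> e = 5" "n e \<noteq> 0" for v e
    using less.hyps[OF sum_dec[of e n, OF that(2,3)] that(1)] .
  have af': "(a = 1 \<and> f = 5) \<or> (a = 5 \<and> f = 1)" using ok by (simp add: okp_def)
  have p: "odd (n 1) \<longleftrightarrow> 1 \<in> par a f u" "odd (n 2) \<longleftrightarrow> 2 \<in> par a f u"
    "odd (n 3) \<longleftrightarrow> 3 \<in> par a f u" "odd (n 4) \<longleftrightarrow> 4 \<in> par a f u" "odd (n 5) \<longleftrightarrow> 5 \<in> par a f u"
    "n 3 = 0 \<longrightarrow> n 4 = 0 \<and> n f = 0"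
    using C by (simp_all add: Cex_def)
  have nzs: "odd x \<Longrightarrow> x \<noteq> 0" for x :: nat by (cases x) auto
  have step: "(u, n) \<in> RS (Gends a)"
    if "Cex a f v (n(e := n e - 1))" "e = 1 \<or> e = 2 \<or> e = 3 \<or> e = 4 \<or> e = 5" "n e \<noteq> 0"
       "e \<in> incident H_edges (Gends a) v" "other_end (Gends a) e v = u" for v e
    by (rule RS_pred[where n = n and e = e, OF IH[OF that(1-3)] that(4,5) that(3)]) simp
  show ?case
  proof (cases "n 1 + n 2 + n 3 + n 4 + n 5 = 0")
    case True
    hence z: "n 1 = 0" "n 2 = 0" "n 3 = 0" "n 4 = 0" "n 5 = 0" by simp_all
    have "n i = 0" for i
    proof (cases "i = 0 \<or> 5 < i")
      case True thus ?thesis by (rule supp[rule_format])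
    next
      case False hence "i = 1 \<or> i = 2 \<or> i = 3 \<or> i = 4 \<or> i = 5" by presburger
      thus ?thesis using z by (elim disjE) (simp_all only:)
    qed
    hence nz0: "n = (\<lambda>_. 0)" by (simp add: fun_eq_iff)
    have "u = 0"
    proof (rule ccontr)
      assume "u \<noteq> 0"
      hence "u = 1 \<or> u = 2 \<or> u = 3 \<or> u = 4 \<or> u = 5" using u by auto
      thus False
      proof (elim disjE)
        assume "u = 2"
        moreover have "a = 1 \<or> a = 5" using af by blast
        ultimately show False using p(1,5) z by (auto simp: par_simps)
      qed (use p(2,3) z in \<open>simp_all add: par_simps\<close>)
    qed
    thus ?thesis using nz0 RS.base by simp
  next
    case False
    have "u = 0 \<or> u = 1 \<or> u = 2 \<or> u = 3 \<or> u = 4 \<or> u = 5" using u by auto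
    thus ?thesis
    proof (elim disjE)
      assume u: "u = 0"
      show ?thesis
      proof (cases "n a \<noteq> 0")
        case na: True
        show ?thesis
        proof (rule step[of 2 a])
        show "Cex a f 2 (n(a := n a - 1))"
          by (rule Cex_dec_gen[of a f u]) (use C p u af nzs na in \<open>((simp_all add: par_simps), (auto simp: par_simps)?)\<close>)
      qed (use u af nzs na oth_G[OF ok] inc_G[OF ok] in auto)
      next
        case na: False
        show ?thesis
        proof (cases "n 2 \<noteq> 0")
          case n2: True
          show ?thesis
          proof (rule step[of 3 2])
        show "Cex a f 3 (n(2 := n 2 - 1))"
          by (rule Cex_dec_gen[of a f u]) (use C p u af nzs n2 in \<open>((simp_all add: par_simps), (auto simp: par_simps)?)\<close>)
      qed (use u af nzs n2 oth_G[OF ok] inc_G[OF ok] in auto)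
        next
          case n2: False
          show ?thesis
          proof (cases "n 3 \<noteq> 0")
            case n3: True
            show ?thesis
            proof (rule step[of 1 3])
        show "Cex a f 1 (n(3 := n 3 - 1))"
          by (rule Cex_dec_gen[of a f u]) (use C p u af nzs n3 in \<open>((simp_all add: par_simps), (auto simp: par_simps)?)\<close>)
      qed (use u af nzs n3 oth_G[OF ok] inc_G[OF ok] in auto)
          next
            case n3: False
            hence "n 4 = 0 \<and> n f = 0" using p by simp
            thus ?thesis using na n2 n3 af' False by auto
          qed
        qed
      qed
    next
      assume u: "u = 1"
      have n3: "n 3 \<noteq> 0" using p(3) u nzs by (simp add: par_simps)
      show ?thesis
      proof (cases "n 4 \<noteq> 0")
        case n4: True
        show ?thesis
        proof (rule step[of 4 4])
        show "Cex a f 4 (n(4 := n 4 - 1))"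
          by (rule Cex_dec_gen[of a f u]) (use C p u af nzs n4 n3 in \<open>((simp_all add: par_simps), (auto simp: par_simps)?)\<close>)
      qed (use u af nzs n4 n3 oth_G[OF ok] inc_G[OF ok] in auto)
      next
        case n4: False
        show ?thesis
        proof (cases "n f \<noteq> 0")
          case nf: True
          show ?thesis
          proof (rule step[of 5 f])
        show "Cex a f 5 (n(f := n f - 1))"
          by (rule Cex_dec_gen[of a f u]) (use C p u af nzs nf n3 in \<open>((simp_all add: par_simps), (auto simp: par_simps)?)\<close>)
      qed (use u af nzs nf n3 oth_G[OF ok] inc_G[OF ok] in auto)
        next
          case nf: False
          show ?thesis
          proof (rule step[of 0 3])
        show "Cex a f 0 (n(3 := n 3 - 1))"
          by (rule Cex_dec_gen[of a f u]) (use C p u af nzs n4 nf n3 in \<open>((simp_all add: par_simps), (auto simp: par_simps)?)\<close>)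
      qed (use u af nzs n4 nf n3 oth_G[OF ok] inc_G[OF ok] in auto)
        qed
      qed
    next
      assume u: "u = 2"
      have na: "n a \<noteq> 0" using p u nzs af by (auto simp: par_simps)
      show ?thesis
      proof (rule step[of 0 a])
        show "Cex a f 0 (n(a := n a - 1))"
          by (rule Cex_dec_gen[of a f u]) (use C p u af nzs na in \<open>((simp_all add: par_simps), (auto simp: par_simps)?)\<close>)
      qed (use u af nzs na oth_G[OF ok] inc_G[OF ok] in auto)
    next
      assume u: "u = 3"
      have n2: "n 2 \<noteq> 0" using p(2) u nzs by (simp add: par_simps)
      show ?thesis
      proof (rule step[of 0 2])
        show "Cex a f 0 (n(2 := n 2 - 1))"
          by (rule Cex_dec_gen[of a f u]) (use C p u af nzs n2 in \<open>((simp_all add: par_simps), (auto simp: par_simps)?)\<close>)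
      qed (use u af nzs n2 oth_G[OF ok] inc_G[OF ok] in auto)
    next
      assume u: "u = 4"
      have n4: "n 4 \<noteq> 0" using p(4) u nzs by (simp add: par_simps)
      have n3: "n 3 \<noteq> 0" using p(3) u nzs by (simp add: par_simps)
      show ?thesis
      proof (rule step[of 1 4])
        show "Cex a f 1 (n(4 := n 4 - 1))"
          by (rule Cex_dec_gen[of a f u]) (use C p u af nzs n4 n3 in \<open>((simp_all add: par_simps), (auto simp: par_simps)?)\<close>)
      qed (use u af nzs n4 n3 oth_G[OF ok] inc_G[OF ok] in auto)
    next
      assume u: "u = 5"
      have nf: "n f \<noteq> 0" using p u nzs af by (auto simp: par_simps)
      have n3: "n 3 \<noteq> 0" using p(3) u nzs by (simp add: par_simps)
      show ?thesis
      proof (rule step[of 1 f])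
        show "Cex a f 1 (n(f := n f - 1))"
          by (rule Cex_dec_gen[of a f u]) (use C p u af nzs nf n3 in \<open>((simp_all add: par_simps), (auto simp: par_simps)?)\<close>)
      qed (use u af nzs nf n3 oth_G[OF ok] inc_G[OF ok] in auto)
    qed
  qed
qed

definition supp5 :: "(nat \<Rightarrow> nat) \<Rightarrow> bool" where
  "supp5 n \<longleftrightarrow> (\<forall>i. (i = 0 \<or> 5 < i) \<longrightarrow> n i = 0)"

lemma RS_supp: "(u, n) \<in> RS ep \<Longrightarrow> supp5 n"
proof (induction rule: RS.induct)
  case base thus ?case by (simp add: supp5_def)
next
  case (step u n e)
  have "e \<in> {1..5}" using step.hyps(2) inc_sub[of ep u] by blast
  hence ne: "e \<noteq> 0 \<and> \<not> 5 < e" by auto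
  show ?case unfolding supp5_def
  proof (intro allI impI)
    fix i :: nat assume i: "i = 0 \<or> 5 < i"
    hence "i \<noteq> e" using ne by auto
    thus "(n(e := Suc (n e))) i = 0" using step.IH[unfolded supp5_def, rule_format, OF i] by simp
  qed
qed

lemma LS_15: "LS t {1..5} T = {n. supp5 n \<and> W t n \<le> T}"
proof -
  have "(\<forall>i. i \<notin> {1..5::nat} \<longrightarrow> n i = 0) \<longleftrightarrow> supp5 n" for n :: "nat \<Rightarrow> nat"
  proof
    assume h: "\<forall>i. i \<notin> {1..5::nat} \<longrightarrow> n i = 0"
    show "supp5 n" unfolding supp5_def
    proof (intro allI impI)
      fix i :: nat assume "i = 0 \<or> 5 < i" hence "i \<notin> {1..5}" by auto
      thus "n i = 0" using h[rule_format] by simp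
    qed
  next
    assume h: "supp5 n"
    show "\<forall>i. i \<notin> {1..5::nat} \<longrightarrow> n i = 0"
    proof (intro allI impI)
      fix i :: nat assume "i \<notin> {1..5}" hence "\<not> (1 \<le> i \<and> i \<le> 5)" by simp
      hence "i = 0 \<or> 5 < i" by linarith
      thus "n i = 0" using h[unfolded supp5_def, rule_format] by simp
    qed
  qed
  thus ?thesis by (simp only: LS_def W_def)
qed


lemma finite_supp5:
  assumes pos: "\<forall>i\<in>{1..5}. t i > 0"
  shows "finite {n. supp5 n \<and> W t n \<le> T}"
proof -
  have "finite (LS t {1..5} T)" by (rule finite_LS) (use pos in auto)
  thus ?thesis by (simp only: LS_15)
qed

lemma finite_C:
  assumes pos: "\<forall>i\<in>{1..5}. t i > 0"
  shows "finite {n. (u, n) \<in> RS ep \<and> W t n \<le> T}"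
  by (rule finite_subset[OF _ finite_supp5[OF pos]]) (use RS_supp in blast)

lemma pair_count:
  assumes pos: "\<forall>i\<in>{1..5}. t i > 0" and e: "e \<in> incident H_edges ep u" and w: "w = other_end ep e u"
  shows "real (card {n. (u, n) \<in> RS ep \<and> e \<in> incident H_edges ep u \<and> W t n \<le> T \<and> T < W t n + t e}) =
         real (card {n. (u, n) \<in> RS ep \<and> W t n \<le> T}) - real (card {n. (w, n) \<in> RS ep \<and> W t n \<le> T})
         + real (card {m. (w, m) \<in> RS ep \<and> W t m \<le> T \<and> \<not> (m e \<noteq> 0 \<and> (u, m(e := m e - 1)) \<in> RS ep)})"
proof -
  have e5: "e \<in> {1..5}" using e inc_sub[of ep u] by blast
  have te: "t e > 0" using pos e5 by blast
  define Cu where "Cu = {n. (u, n) \<in> RS ep \<and> W t n \<le> T}"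
  define Cw where "Cw = {n. (w, n) \<in> RS ep \<and> W t n \<le> T}"
  define Y where "Y = {n. (u, n) \<in> RS ep \<and> W t n + t e \<le> T}"
  define P where "P = {m. (w, m) \<in> RS ep \<and> W t m \<le> T \<and> m e \<noteq> 0 \<and> (u, m(e := m e - 1)) \<in> RS ep}"
  have fCu: "finite Cu" unfolding Cu_def by (rule finite_C[OF pos])
  have fCw: "finite Cw" unfolding Cw_def by (rule finite_C[OF pos])
  have YC: "Y \<subseteq> Cu" unfolding Y_def Cu_def using te by auto
  have PC: "P \<subseteq> Cw" unfolding P_def Cw_def by auto
  have M: "{n. (u, n) \<in> RS ep \<and> e \<in> incident H_edges ep u \<and> W t n \<le> T \<and> T < W t n + t e} = Cu - Y"
    unfolding Cu_def Y_def using e by auto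
  have D: "{m. (w, m) \<in> RS ep \<and> W t m \<le> T \<and> \<not> (m e \<noteq> 0 \<and> (u, m(e := m e - 1)) \<in> RS ep)} = Cw - P"
    unfolding Cw_def P_def by auto
  have bij: "bij_betw (\<lambda>n. n(e := Suc (n e))) Y P"
  proof (rule bij_betw_byWitness[where f' = "\<lambda>m. m(e := m e - 1)"])
    show "\<forall>a\<in>Y. (a(e := Suc (a e)))(e := (a(e := Suc (a e))) e - 1) = a" by auto
    show "\<forall>a'\<in>P. (a'(e := a' e - 1))(e := Suc ((a'(e := a' e - 1)) e)) = a'" unfolding P_def by auto
    show "(\<lambda>n. n(e := Suc (n e))) ` Y \<subseteq> P"
    proof
      fix m assume "m \<in> (\<lambda>n. n(e := Suc (n e))) ` Y"
      then obtain n where n: "n \<in> Y" "m = n(e := Suc (n e))" by auto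
      have "(w, m) \<in> RS ep" using RS.step[of u n ep e] n e w unfolding Y_def by auto
      moreover have "W t m = W t n + t e" using n(2) W_step[OF e5] by simp
      moreover have "m(e := m e - 1) = n" using n(2) by auto
      ultimately show "m \<in> P" using n(1) unfolding P_def Y_def using n(2) by auto
    qed
    show "(\<lambda>m. m(e := m e - 1)) ` P \<subseteq> Y"
    proof
      fix n assume "n \<in> (\<lambda>m. m(e := m e - 1)) ` P"
      then obtain m where m: "m \<in> P" "n = m(e := m e - 1)" by auto
      have mm: "n(e := Suc (n e)) = m" using m unfolding P_def by auto
      have "W t m = W t n + t e" using W_step[OF e5, of t n] mm by simp
      thus "n \<in> Y" using m unfolding P_def Y_def by auto
    qed
  qed
  have cY: "card Y = card P" by (rule bij_betw_same_card[OF bij])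
  have "card (Cu - Y) = card Cu - card Y" by (rule card_Diff_subset[OF finite_subset[OF YC fCu] YC])
  moreover have "card (Cw - P) = card Cw - card P" by (rule card_Diff_subset[OF finite_subset[OF PC fCw] PC])
  moreover have "card Y \<le> card Cu" by (rule card_mono[OF fCu YC])
  moreover have "card P \<le> card Cw" by (rule card_mono[OF fCw PC])
  ultimately show ?thesis unfolding M D using cY
    by (simp add: Cu_def[symmetric] Cw_def[symmetric] of_nat_diff)
qed

lemma W_inj:
  assumes ind: "\<forall>q :: nat \<Rightarrow> rat. (\<Sum>i=1..5. of_rat (q i) * t i) = 0 \<longrightarrow> (\<forall>i\<in>{1..5}. q i = 0)"
    and s1: "supp5 n" and s2: "supp5 n'" and eq: "W t n = W t n'"
  shows "n = n'"
proof -
  define q :: "nat \<Rightarrow> rat" where "q i = of_nat (n i) - of_nat (n' i)" for i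
  have "(\<Sum>i=1..5. of_rat (q i) * t i) = (\<Sum>i=1..5. t i * real (n i)) - (\<Sum>i=1..5. t i * real (n' i))"
    by (simp add: q_def of_rat_diff sum_subtractf[symmetric] algebra_simps)
  also have "\<dots> = 0" using eq by (simp add: W_def)
  finally have "\<forall>i\<in>{1..5}. q i = 0" using ind by blast
  hence a: "n i = n' i" if "i \<in> {1..5}" for i using that by (auto simp: q_def)
  show ?thesis
  proof
    fix i :: nat
    show "n i = n' i"
    proof (cases "i = 0 \<or> 5 < i")
      case True
      thus ?thesis using s1[unfolded supp5_def, rule_format, OF True] s2[unfolded supp5_def, rule_format, OF True] by simp
    next
      case False hence "i \<in> {1..5}" by auto
      thus ?thesis by (rule a)
    qed
  qed
qed

definition Mset :: "(nat \<Rightarrow> nat \<times> nat) \<Rightarrow> (nat \<Rightarrow> real) \<Rightarrow> real \<Rightarrow> nat \<Rightarrow> nat \<Rightarrow> (nat \<Rightarrow> nat) set" where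
  "Mset ep t T e u = {n. (u, n) \<in> RS ep \<and> e \<in> incident H_edges ep u \<and> W t n \<le> T \<and> T < W t n + t e}"

lemma num_points_sum:
  assumes pos: "\<forall>i\<in>{1..5}. t i > 0"
    and ind: "\<forall>q :: nat \<Rightarrow> rat. (\<Sum>i=1..5. of_rat (q i) * t i) = 0 \<longrightarrow> (\<forall>i\<in>{1..5}. q i = 0)"
  shows "num_points H_edges (Gends a) t 0 T = (\<Sum>e\<in>{1..5}. \<Sum>u\<in>{0..5}. card (Mset (Gends a) t T e u))"
proof -
  define Mv where "Mv = {(e, u, n). (u, n) \<in> RS (Gends a) \<and> e \<in> incident H_edges (Gends a) u \<and> W t n \<le> T \<and> T < W t n + t e}"
  have img: "{(e, u, s). (e, u, s) \<in> moving H_edges (Gends a) t 0 \<and> s \<le> T \<and> T < s + t e}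
      = (\<lambda>(e, u, n). (e, u, W t n)) ` Mv"
    unfolding Mv_def by (auto simp: moving_RS image_iff)
  have inj: "inj_on (\<lambda>(e, u, n). (e, u, W t n)) Mv"
  proof (rule inj_onI)
    fix x y assume x: "x \<in> Mv" and y: "y \<in> Mv" and xy: "(\<lambda>(e, u, n). (e, u, W t n)) x = (\<lambda>(e, u, n). (e, u, W t n)) y"
    obtain e u n where xe: "x = (e, u, n)" by (cases x) auto
    obtain e' u' n' where ye: "y = (e', u', n')" by (cases y) auto
    have "supp5 n" using x xe unfolding Mv_def by (auto intro: RS_supp)
    moreover have "supp5 n'" using y ye unfolding Mv_def by (auto intro: RS_supp)
    ultimately have "n = n'" using xy xe ye W_inj[OF ind] by auto
    thus "x = y" using xy xe ye by auto
  qed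
  have sig: "Mv = (SIGMA e:{1..5}. SIGMA u:{0..5}. Mset (Gends a) t T e u)"
  proof -
    have "e \<in> {1..5}" if "e \<in> incident H_edges (Gends a) u" for e u using that inc_sub[of "Gends a" u] by blast
    moreover have "u \<in> {0..5}" if "e \<in> incident H_edges (Gends a) u" for e u :: nat
    proof -
      have "incident H_edges (Gends a) u \<noteq> {}" using that by blast
      hence "u = fst ((Gends a) e) \<or> u = snd ((Gends a) e)" using that by (auto simp: incident_def)
      thus ?thesis unfolding Gends_def by (auto split: if_splits)
    qed
    ultimately show ?thesis unfolding Mv_def Mset_def by auto
  qed
  have fin: "finite (Mset (Gends a) t T e u)" for e u
    by (rule finite_subset[OF _ finite_C[OF pos, of u "Gends a" T]]) (auto simp: Mset_def)
  have "num_points H_edges (Gends a) t 0 T = card Mv"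
    unfolding num_points_def img by (rule card_image[OF inj])
  also have "\<dots> = (\<Sum>e\<in>{1..5}. card (SIGMA u:{0..5}. Mset (Gends a) t T e u))"
    unfolding sig by (rule card_SigmaI) (auto intro: fin)
  also have "\<dots> = (\<Sum>e\<in>{1..5}. \<Sum>u\<in>{0..5}. card (Mset (Gends a) t T e u))"
    by (intro sum.cong refl card_SigmaI) (auto intro: fin)
  finally show ?thesis .
qed

lemma okp15: "okp 1 5" and okp51: "okp 5 1" by (simp_all add: okp_def)

lemma Mset_empty: "e \<notin> incident H_edges ep u \<Longrightarrow> Mset ep t T e u = {}"
  by (auto simp: Mset_def)

lemma set15: "{1..5::nat} = {1,2,3,4,5}" and set05: "{0..5::nat} = {0,1,2,3,4,5}" by auto

lemma sum_expand:
  assumes ok: "okp a f"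
  shows "(\<Sum>e\<in>{1..5}. \<Sum>u\<in>{0..5}. card (Mset (Gends a) t T e u)) =
    card (Mset (Gends a) t T a 0) + card (Mset (Gends a) t T 2 0) + card (Mset (Gends a) t T 3 0)
    + card (Mset (Gends a) t T 3 1) + card (Mset (Gends a) t T 4 1) + card (Mset (Gends a) t T f 1)
    + card (Mset (Gends a) t T a 2) + card (Mset (Gends a) t T 2 3) + card (Mset (Gends a) t T 4 4)
    + card (Mset (Gends a) t T f 5)"
proof -
  have "(a = 1 \<and> f = 5) \<or> (a = 5 \<and> f = 1)" using ok by (simp add: okp_def)
  thus ?thesis
  proof (elim disjE conjE)
    assume a: "a = 1" and f: "f = 5"
    show ?thesis unfolding a f set15 set05
      by (simp add: Mset_empty inc_G[OF okp15, simplified] inc_G[OF okp51, simplified])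
  next
    assume a: "a = 5" and f: "f = 1"
    show ?thesis unfolding a f set15 set05
      by (simp add: Mset_empty inc_G[OF okp15, simplified] inc_G[OF okp51, simplified])
  qed
qed

definition Dset :: "(nat \<Rightarrow> nat \<times> nat) \<Rightarrow> (nat \<Rightarrow> real) \<Rightarrow> real \<Rightarrow> nat \<Rightarrow> nat \<Rightarrow> nat \<Rightarrow> (nat \<Rightarrow> nat) set" where
  "Dset ep t T w e u = {m. (w, m) \<in> RS ep \<and> W t m \<le> T \<and> \<not> (m e \<noteq> 0 \<and> (u, m(e := m e - 1)) \<in> RS ep)}"

lemma N_D:
  assumes pos: "\<forall>i\<in>{1..5}. t i > 0"
    and ind: "\<forall>q :: nat \<Rightarrow> rat. (\<Sum>i=1..5. of_rat (q i) * t i) = 0 \<longrightarrow> (\<forall>i\<in>{1..5}. q i = 0)"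
    and ok: "okp a f"
  shows "real (num_points H_edges (Gends a) t 0 T) =
    real (card (Dset (Gends a) t T 0 a 2)) + real (card (Dset (Gends a) t T 0 2 3))
    + real (card (Dset (Gends a) t T 0 3 1)) + real (card (Dset (Gends a) t T 1 3 0))
    + real (card (Dset (Gends a) t T 1 4 4)) + real (card (Dset (Gends a) t T 1 f 5))
    + real (card (Dset (Gends a) t T 2 a 0)) + real (card (Dset (Gends a) t T 3 2 0))
    + real (card (Dset (Gends a) t T 4 4 1)) + real (card (Dset (Gends a) t T 5 f 1))"
proof -
  let ?C = "\<lambda>u. real (card {n. (u, n) \<in> RS (Gends a) \<and> W t n \<le> T})"
  let ?M = "\<lambda>e u. real (card (Mset (Gends a) t T e u))"
  let ?D = "\<lambda>w e u. real (card (Dset (Gends a) t T w e u))"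
  have pc: "?M e u = ?C u - ?C w + ?D w e u"
    if "e \<in> incident H_edges (Gends a) u" "w = other_end (Gends a) e u" for e u w
    using pair_count[OF pos that] unfolding Mset_def Dset_def .
  have I: "a \<in> incident H_edges (Gends a) 0" "2 \<in> incident H_edges (Gends a) 0" "3 \<in> incident H_edges (Gends a) 0"
     "3 \<in> incident H_edges (Gends a) 1" "4 \<in> incident H_edges (Gends a) 1" "f \<in> incident H_edges (Gends a) 1"
     "a \<in> incident H_edges (Gends a) 2" "2 \<in> incident H_edges (Gends a) 3" "4 \<in> incident H_edges (Gends a) 4"
     "f \<in> incident H_edges (Gends a) 5"
    using ok by (simp_all add: inc_G[OF ok] okp_def)
  note O = oth_G[OF ok]
  have "real (num_points H_edges (Gends a) t 0 T) = ?M a 0 + ?M 2 0 + ?M 3 0 + ?M 3 1 + ?M 4 1 + ?M f 1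
      + ?M a 2 + ?M 2 3 + ?M 4 4 + ?M f 5"
    using num_points_sum[OF pos ind, of a T] sum_expand[OF ok, of t T] by simp
  moreover note pc[OF I(1) O(1)[symmetric]] pc[OF I(2) O(2)[symmetric]] pc[OF I(3) O(3)[symmetric]]
    pc[OF I(4) O(4)[symmetric]] pc[OF I(5) O(5)[symmetric]] pc[OF I(6) O(6)[symmetric]]
    pc[OF I(7) O(7)[symmetric]] pc[OF I(8) O(8)[symmetric]] pc[OF I(9) O(9)[symmetric]]
    pc[OF I(10) O(10)[symmetric]]
  ultimately show ?thesis by linarith
qed

definition Qs :: "(nat \<Rightarrow> real) \<Rightarrow> nat set \<Rightarrow> (nat \<Rightarrow> nat) \<Rightarrow> real \<Rightarrow> (nat \<Rightarrow> nat) set" where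
  "Qs t S oo T = {m. (\<forall>i. i \<in> S \<longrightarrow> oo i \<le> m i \<and> even (m i - oo i)) \<and> (\<forall>i. i \<notin> S \<longrightarrow> m i = oo i) \<and> W t m \<le> T}"

lemma card_Qs:
  assumes S: "S \<subseteq> {1..5}" and oo: "supp5 oo"
  shows "card (Qs t S oo T) = lattice_count t S ((T - W t oo) / 2)"
proof -
  have o0: "oo i = 0" if "i \<notin> {1..5}" for i
  proof -
    have "i = 0 \<or> 5 < i" using that by auto
    thus ?thesis by (rule oo[unfolded supp5_def, rule_format])
  qed
  have Wk: "W t (\<lambda>i. 2 * k i + oo i) = 2 * (\<Sum>i\<in>S. t i * real (k i)) + W t oo"
    if k: "\<forall>i. i \<notin> S \<longrightarrow> k i = 0" for k :: "nat \<Rightarrow> nat"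
  proof -
    have "(\<Sum>i\<in>{1..5}. t i * real (k i)) = (\<Sum>i\<in>S. t i * real (k i))"
      by (rule sum.mono_neutral_right) (use S k in auto)
    moreover have "W t (\<lambda>i. 2 * k i + oo i) = 2 * (\<Sum>i\<in>{1..5}. t i * real (k i)) + W t oo"
      unfolding W_def by (simp add: sum.distrib sum_distrib_left algebra_simps)
    ultimately show ?thesis by simp
  qed
  have bij: "bij_betw (\<lambda>k i. 2 * k i + oo i) (LS t S ((T - W t oo) / 2)) (Qs t S oo T)"
  proof (rule bij_betw_byWitness[where f' = "\<lambda>m i. (m i - oo i) div 2"])
    show "\<forall>k\<in>LS t S ((T - W t oo) / 2). (\<lambda>i. (2 * k i + oo i - oo i) div 2) = k" by auto
    show "\<forall>m\<in>Qs t S oo T. (\<lambda>i. 2 * ((m i - oo i) div 2) + oo i) = m"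
    proof
      fix m assume m: "m \<in> Qs t S oo T"
      show "(\<lambda>i. 2 * ((m i - oo i) div 2) + oo i) = m"
      proof
        fix i show "2 * ((m i - oo i) div 2) + oo i = m i"
        proof (cases "i \<in> S")
          case True
          hence "oo i \<le> m i" "even (m i - oo i)" using m unfolding Qs_def by blast+
          thus ?thesis by simp
        next
          case False
          hence "m i = oo i" using m unfolding Qs_def by blast
          thus ?thesis by simp
        qed
      qed
    qed
    show "(\<lambda>k i. 2 * k i + oo i) ` LS t S ((T - W t oo) / 2) \<subseteq> Qs t S oo T"
    proof
      fix m assume "m \<in> (\<lambda>k i. 2 * k i + oo i) ` LS t S ((T - W t oo) / 2)"
      then obtain k where k: "k \<in> LS t S ((T - W t oo) / 2)" and m: "m = (\<lambda>i. 2 * k i + oo i)" by blast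
      have k0: "\<forall>i. i \<notin> S \<longrightarrow> k i = 0" and ks: "(\<Sum>i\<in>S. t i * real (k i)) \<le> (T - W t oo) / 2"
        using k unfolding LS_def by blast+
      have "W t m \<le> T" using Wk[OF k0] ks m by simp
      moreover have "\<forall>i. i \<in> S \<longrightarrow> oo i \<le> m i \<and> even (m i - oo i)" using m by simp
      moreover have "\<forall>i. i \<notin> S \<longrightarrow> m i = oo i" using m k0 by simp
      ultimately show "m \<in> Qs t S oo T" unfolding Qs_def by blast
    qed
    show "(\<lambda>m i. (m i - oo i) div 2) ` Qs t S oo T \<subseteq> LS t S ((T - W t oo) / 2)"
    proof
      fix k assume "k \<in> (\<lambda>m i. (m i - oo i) div 2) ` Qs t S oo T"
      then obtain m where m: "m \<in> Qs t S oo T" and k: "k = (\<lambda>i. (m i - oo i) div 2)" by blast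
      have k0: "\<forall>i. i \<notin> S \<longrightarrow> k i = 0" using m k unfolding Qs_def by simp
      have mk: "m = (\<lambda>i. 2 * k i + oo i)"
      proof
        fix i show "m i = 2 * k i + oo i"
        proof (cases "i \<in> S")
          case True
          hence "oo i \<le> m i" "even (m i - oo i)" using m unfolding Qs_def by blast+
          thus ?thesis using k by simp
        next
          case False
          hence "m i = oo i" using m unfolding Qs_def by blast
          thus ?thesis using k by simp
        qed
      qed
      have "W t m \<le> T" using m unfolding Qs_def by blast
      hence "(\<Sum>i\<in>S. t i * real (k i)) \<le> (T - W t oo) / 2" using Wk[OF k0] mk by simp
      thus "k \<in> LS t S ((T - W t oo) / 2)" using k0 unfolding LS_def by blast
    qed
  qed
  show ?thesis using bij_betw_same_card[OF bij] by (simp add: lattice_count_LS)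
qed

lemma RS_iff: "okp a f \<Longrightarrow> (u, n) \<in> RS (Gends a) \<longleftrightarrow> Cex a f u n"
  using RS_Cex Cex_RS by blast

lemma Cex_alt: "Cex a f u n \<longleftrightarrow> u \<le> 5 \<and> supp5 n \<and>
     (odd (n 1) \<longleftrightarrow> 1 \<in> par a f u) \<and> (odd (n 2) \<longleftrightarrow> 2 \<in> par a f u) \<and> (odd (n 3) \<longleftrightarrow> 3 \<in> par a f u) \<and>
     (odd (n 4) \<longleftrightarrow> 4 \<in> par a f u) \<and> (odd (n 5) \<longleftrightarrow> 5 \<in> par a f u) \<and>
     (n 3 = 0 \<longrightarrow> n 4 = 0 \<and> n f = 0)"
  unfolding Cex_def supp5_def by (rule refl)

lemma supp5_upd: "e \<noteq> 0 \<Longrightarrow> e \<le> 5 \<Longrightarrow> supp5 (n(e := x)) \<longleftrightarrow> supp5 n"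
proof -
  assume e: "e \<noteq> 0" "e \<le> 5"
  have "(n(e := x)) i = n i" if "i = 0 \<or> 5 < i" for i using that e by auto
  thus ?thesis unfolding supp5_def by simp
qed

lemma ball15: "(\<forall>i\<in>{1..5::nat}. P i) \<longleftrightarrow> P 1 \<and> P 2 \<and> P 3 \<and> P 4 \<and> P 5"
  unfolding set15 by simp

lemma Qs_mem:
  assumes S: "S \<subseteq> {1..5}" and oo: "supp5 oo"
  shows "m \<in> Qs t S oo T \<longleftrightarrow> supp5 m \<and>
     (\<forall>i\<in>{1..5}. if i \<in> S then oo i \<le> m i \<and> even (m i - oo i) else m i = oo i) \<and> W t m \<le> T"
proof -
  have A: "(\<forall>i. i \<in> S \<longrightarrow> oo i \<le> m i \<and> even (m i - oo i)) \<and> (\<forall>i. i \<notin> S \<longrightarrow> m i = oo i) \<longleftrightarrow>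
     supp5 m \<and> (\<forall>i\<in>{1..5}. if i \<in> S then oo i \<le> m i \<and> even (m i - oo i) else m i = oo i)"
  proof
    assume h: "(\<forall>i. i \<in> S \<longrightarrow> oo i \<le> m i \<and> even (m i - oo i)) \<and> (\<forall>i. i \<notin> S \<longrightarrow> m i = oo i)"
    have "supp5 m" unfolding supp5_def
    proof (intro allI impI)
      fix i :: nat assume i: "i = 0 \<or> 5 < i"
      hence "i \<notin> S" using S by auto
      hence "m i = oo i" using h by blast
      also have "oo i = 0" by (rule oo[unfolded supp5_def, rule_format, OF i])
      finally show "m i = 0" .
    qed
    moreover have "\<forall>i\<in>{1..5}. if i \<in> S then oo i \<le> m i \<and> even (m i - oo i) else m i = oo i"
      using h by simp
    ultimately show "supp5 m \<and> (\<forall>i\<in>{1..5}. if i \<in> S then oo i \<le> m i \<and> even (m i - oo i) else m i = oo i)" by blast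
  next
    assume h: "supp5 m \<and> (\<forall>i\<in>{1..5}. if i \<in> S then oo i \<le> m i \<and> even (m i - oo i) else m i = oo i)"
    have 1: "\<forall>i. i \<in> S \<longrightarrow> oo i \<le> m i \<and> even (m i - oo i)"
    proof (intro allI impI)
      fix i assume i: "i \<in> S" hence "i \<in> {1..5}" using S by blast
      hence "if i \<in> S then oo i \<le> m i \<and> even (m i - oo i) else m i = oo i" using h by blast
      thus "oo i \<le> m i \<and> even (m i - oo i)" using i by (simp only: if_True)
    qed
    have 2: "\<forall>i. i \<notin> S \<longrightarrow> m i = oo i"
    proof (intro allI impI)
      fix i assume i: "i \<notin> S"
      show "m i = oo i"
      proof (cases "i \<in> {1..5}")
        case True thus ?thesis using h i by auto
      next
        case False hence i0: "i = 0 \<or> 5 < i" by auto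
        have "supp5 m" using h by blast
        hence "m i = 0" by (rule supp5_def[THEN iffD1, rule_format, OF _ i0])
        moreover have "oo i = 0" by (rule oo[unfolded supp5_def, rule_format, OF i0])
        ultimately show ?thesis by simp
      qed
    qed
    show "(\<forall>i. i \<in> S \<longrightarrow> oo i \<le> m i \<and> even (m i - oo i)) \<and> (\<forall>i. i \<notin> S \<longrightarrow> m i = oo i)"
      using 1 2 by blast
  qed
  show ?thesis unfolding Qs_def using A by blast
qed

lemma supp5_o: "supp5 (\<lambda>i. if i = 3 then c else 0)" "supp5 (\<lambda>_. 0)"
   "f \<in> {1..5} \<Longrightarrow> supp5 (\<lambda>i. if i = 3 then 1 else if i = f then 2 else 0)"
  unfolding supp5_def by auto

lemma D_0a2:
  assumes ok: "okp a f"
  shows "Dset (Gends a) t T 0 a 2 = Qs t {2,3,4,f} (\<lambda>i. if i = 3 then 2 else 0) T \<union> Qs t {2} (\<lambda>_. 0) T"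
proof -
  have af: "(a = 1 \<and> f = 5) \<or> (a = 5 \<and> f = 1)" using ok by (simp add: okp_def)
  have f5: "f \<in> {1..5}" using af by auto
  have S: "{2,3,4,f} \<subseteq> {1..5::nat}" "{2} \<subseteq> {1..5::nat}" using af by auto
  note R = RS_iff[OF ok]
  from af show ?thesis
  proof (elim disjE conjE)
    assume a: "a = 1" and f: "f = 5"
    show ?thesis
      apply (rule set_eqI)
      unfolding Dset_def R Un_iff mem_Collect_eq Qs_mem[OF S(1) supp5_o(1)] Qs_mem[OF S(2) supp5_o(2)] ball15 Cex_alt
      apply (simp add: supp5_upd par_simps a f)
      apply (auto simp: odd_pos Suc_le_eq)
      apply ((fastforce dest: odd_pos)+)?
      done
  next
    assume a: "a = 5" and f: "f = 1"
    show ?thesis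
      apply (rule set_eqI)
      unfolding Dset_def R Un_iff mem_Collect_eq Qs_mem[OF S(1) supp5_o(1)] Qs_mem[OF S(2) supp5_o(2)] ball15 Cex_alt
      apply (simp add: supp5_upd par_simps a f)
      apply (auto simp: odd_pos Suc_le_eq)
      apply ((fastforce dest: odd_pos)+)?
      done
  qed
qed

lemma D_023:
  assumes ok: "okp a f"
  shows "Dset (Gends a) t T 0 2 3 = Qs t {a,3,4,f} (\<lambda>i. if i = 3 then 2 else 0) T \<union> Qs t {a} (\<lambda>_. 0) T"
proof -
  have af: "(a = 1 \<and> f = 5) \<or> (a = 5 \<and> f = 1)" using ok by (simp add: okp_def)
  have f5: "f \<in> {1..5}" using af by auto
  have S: "{a,3,4,f} \<subseteq> {1..5::nat}" "{a} \<subseteq> {1..5::nat}" using af by auto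
  note R = RS_iff[OF ok]
  from af show ?thesis
  proof (elim disjE conjE)
    assume a: "a = 1" and f: "f = 5"
    show ?thesis
      apply (rule set_eqI)
      unfolding Dset_def R Un_iff mem_Collect_eq Qs_mem[OF S(1) supp5_o(1)] Qs_mem[OF S(2) supp5_o(2)] ball15 Cex_alt
      apply (simp add: supp5_upd par_simps a f)
      apply (auto simp: odd_pos Suc_le_eq)
      apply ((fastforce dest: odd_pos)+)?
      done
  next
    assume a: "a = 5" and f: "f = 1"
    show ?thesis
      apply (rule set_eqI)
      unfolding Dset_def R Un_iff mem_Collect_eq Qs_mem[OF S(1) supp5_o(1)] Qs_mem[OF S(2) supp5_o(2)] ball15 Cex_alt
      apply (simp add: supp5_upd par_simps a f)
      apply (auto simp: odd_pos Suc_le_eq)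
      apply ((fastforce dest: odd_pos)+)?
      done
  qed
qed

lemma D_031:
  assumes ok: "okp a f"
  shows "Dset (Gends a) t T 0 3 1 = Qs t {a,2} (\<lambda>_. 0) T"
proof -
  have af: "(a = 1 \<and> f = 5) \<or> (a = 5 \<and> f = 1)" using ok by (simp add: okp_def)
  have f5: "f \<in> {1..5}" using af by auto
  have S: "{a,2} \<subseteq> {1..5::nat}" using af by auto
  note R = RS_iff[OF ok]
  from af show ?thesis
  proof (elim disjE conjE)
    assume a: "a = 1" and f: "f = 5"
    show ?thesis
      apply (rule set_eqI)
      unfolding Dset_def R Un_iff mem_Collect_eq Qs_mem[OF S(1) supp5_o(2)] ball15 Cex_alt
      apply (simp add: supp5_upd par_simps a f)
      apply (auto simp: odd_pos Suc_le_eq)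
      apply ((fastforce dest: odd_pos)+)?
      done
  next
    assume a: "a = 5" and f: "f = 1"
    show ?thesis
      apply (rule set_eqI)
      unfolding Dset_def R Un_iff mem_Collect_eq Qs_mem[OF S(1) supp5_o(2)] ball15 Cex_alt
      apply (simp add: supp5_upd par_simps a f)
      apply (auto simp: odd_pos Suc_le_eq)
      apply ((fastforce dest: odd_pos)+)?
      done
  qed
qed

lemma D_130:
  assumes ok: "okp a f"
  shows "Dset (Gends a) t T 1 3 0 = Qs t {a,2,4,f} (\<lambda>i. if i = 3 then 1 else if i = 4 then 2 else 0) T \<union> Qs t {a,2,f} (\<lambda>i. if i = 3 then 1 else if i = f then 2 else 0) T"
proof -
  have af: "(a = 1 \<and> f = 5) \<or> (a = 5 \<and> f = 1)" using ok by (simp add: okp_def)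
  have f5: "f \<in> {1..5}" using af by auto
  have S: "{a,2,4,f} \<subseteq> {1..5::nat}" "{a,2,f} \<subseteq> {1..5::nat}" using af by auto
  note R = RS_iff[OF ok]
  from af show ?thesis
  proof (elim disjE conjE)
    assume a: "a = 1" and f: "f = 5"
    show ?thesis
      apply (rule set_eqI)
      unfolding Dset_def R Un_iff mem_Collect_eq Qs_mem[OF S(1) supp5_o(3)[of 4, simplified]] Qs_mem[OF S(2) supp5_o(3)[OF f5]] ball15 Cex_alt
      apply (simp add: supp5_upd par_simps a f)
      apply (auto simp: odd_pos Suc_le_eq)
      apply ((fastforce dest: odd_pos)+)?
      done
  next
    assume a: "a = 5" and f: "f = 1"
    show ?thesis
      apply (rule set_eqI)
      unfolding Dset_def R Un_iff mem_Collect_eq Qs_mem[OF S(1) supp5_o(3)[of 4, simplified]] Qs_mem[OF S(2) supp5_o(3)[OF f5]] ball15 Cex_alt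
      apply (simp add: supp5_upd par_simps a f)
      apply (auto simp: odd_pos Suc_le_eq)
      apply ((fastforce dest: odd_pos)+)?
      done
  qed
qed

lemma D_144:
  assumes ok: "okp a f"
  shows "Dset (Gends a) t T 1 4 4 = Qs t {a,2,3,f} (\<lambda>i. if i = 3 then 1 else 0) T"
proof -
  have af: "(a = 1 \<and> f = 5) \<or> (a = 5 \<and> f = 1)" using ok by (simp add: okp_def)
  have f5: "f \<in> {1..5}" using af by auto
  have S: "{a,2,3,f} \<subseteq> {1..5::nat}" using af by auto
  note R = RS_iff[OF ok]
  from af show ?thesis
  proof (elim disjE conjE)
    assume a: "a = 1" and f: "f = 5"
    show ?thesis
      apply (rule set_eqI)
      unfolding Dset_def R Un_iff mem_Collect_eq Qs_mem[OF S(1) supp5_o(1)] ball15 Cex_alt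
      apply (simp add: supp5_upd par_simps a f)
      apply (auto simp: odd_pos Suc_le_eq)
      apply ((fastforce dest: odd_pos)+)?
      done
  next
    assume a: "a = 5" and f: "f = 1"
    show ?thesis
      apply (rule set_eqI)
      unfolding Dset_def R Un_iff mem_Collect_eq Qs_mem[OF S(1) supp5_o(1)] ball15 Cex_alt
      apply (simp add: supp5_upd par_simps a f)
      apply (auto simp: odd_pos Suc_le_eq)
      apply ((fastforce dest: odd_pos)+)?
      done
  qed
qed

lemma D_1f5:
  assumes ok: "okp a f"
  shows "Dset (Gends a) t T 1 f 5 = Qs t {a,2,3,4} (\<lambda>i. if i = 3 then 1 else 0) T"
proof -
  have af: "(a = 1 \<and> f = 5) \<or> (a = 5 \<and> f = 1)" using ok by (simp add: okp_def)
  have f5: "f \<in> {1..5}" using af by auto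
  have S: "{a,2,3,4} \<subseteq> {1..5::nat}" using af by auto
  note R = RS_iff[OF ok]
  from af show ?thesis
  proof (elim disjE conjE)
    assume a: "a = 1" and f: "f = 5"
    show ?thesis
      apply (rule set_eqI)
      unfolding Dset_def R Un_iff mem_Collect_eq Qs_mem[OF S(1) supp5_o(1)] ball15 Cex_alt
      apply (simp add: supp5_upd par_simps a f)
      apply (auto simp: odd_pos Suc_le_eq)
      apply ((fastforce dest: odd_pos)+)?
      done
  next
    assume a: "a = 5" and f: "f = 1"
    show ?thesis
      apply (rule set_eqI)
      unfolding Dset_def R Un_iff mem_Collect_eq Qs_mem[OF S(1) supp5_o(1)] ball15 Cex_alt
      apply (simp add: supp5_upd par_simps a f)
      apply (auto simp: odd_pos Suc_le_eq)
      apply ((fastforce dest: odd_pos)+)?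
      done
  qed
qed

lemma D_2a0:
  assumes ok: "okp a f"
  shows "Dset (Gends a) t T 2 a 0 = {}"
proof -
  have af: "(a = 1 \<and> f = 5) \<or> (a = 5 \<and> f = 1)" using ok by (simp add: okp_def)
  have f5: "f \<in> {1..5}" using af by auto
  note R = RS_iff[OF ok]
  from af show ?thesis
  proof (elim disjE conjE)
    assume a: "a = 1" and f: "f = 5"
    show ?thesis
      apply (rule set_eqI)
      unfolding Dset_def R mem_Collect_eq empty_iff Cex_alt
      apply (simp add: supp5_upd par_simps a f)
      apply (auto simp: odd_pos Suc_le_eq)
      apply ((fastforce dest: odd_pos)+)?
      done
  next
    assume a: "a = 5" and f: "f = 1"
    show ?thesis
      apply (rule set_eqI)
      unfolding Dset_def R mem_Collect_eq empty_iff Cex_alt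
      apply (simp add: supp5_upd par_simps a f)
      apply (auto simp: odd_pos Suc_le_eq)
      apply ((fastforce dest: odd_pos)+)?
      done
  qed
qed

lemma D_320:
  assumes ok: "okp a f"
  shows "Dset (Gends a) t T 3 2 0 = {}"
proof -
  have af: "(a = 1 \<and> f = 5) \<or> (a = 5 \<and> f = 1)" using ok by (simp add: okp_def)
  have f5: "f \<in> {1..5}" using af by auto
  note R = RS_iff[OF ok]
  from af show ?thesis
  proof (elim disjE conjE)
    assume a: "a = 1" and f: "f = 5"
    show ?thesis
      apply (rule set_eqI)
      unfolding Dset_def R mem_Collect_eq empty_iff Cex_alt
      apply (simp add: supp5_upd par_simps a f)
      apply (auto simp: odd_pos Suc_le_eq)
      apply ((fastforce dest: odd_pos)+)?
      done
  next
    assume a: "a = 5" and f: "f = 1"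
    show ?thesis
      apply (rule set_eqI)
      unfolding Dset_def R mem_Collect_eq empty_iff Cex_alt
      apply (simp add: supp5_upd par_simps a f)
      apply (auto simp: odd_pos Suc_le_eq)
      apply ((fastforce dest: odd_pos)+)?
      done
  qed
qed

lemma D_441:
  assumes ok: "okp a f"
  shows "Dset (Gends a) t T 4 4 1 = {}"
proof -
  have af: "(a = 1 \<and> f = 5) \<or> (a = 5 \<and> f = 1)" using ok by (simp add: okp_def)
  have f5: "f \<in> {1..5}" using af by auto
  note R = RS_iff[OF ok]
  from af show ?thesis
  proof (elim disjE conjE)
    assume a: "a = 1" and f: "f = 5"
    show ?thesis
      apply (rule set_eqI)
      unfolding Dset_def R mem_Collect_eq empty_iff Cex_alt
      apply (simp add: supp5_upd par_simps a f)
      apply (auto simp: odd_pos Suc_le_eq)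
      apply ((fastforce dest: odd_pos)+)?
      done
  next
    assume a: "a = 5" and f: "f = 1"
    show ?thesis
      apply (rule set_eqI)
      unfolding Dset_def R mem_Collect_eq empty_iff Cex_alt
      apply (simp add: supp5_upd par_simps a f)
      apply (auto simp: odd_pos Suc_le_eq)
      apply ((fastforce dest: odd_pos)+)?
      done
  qed
qed

lemma D_5f1:
  assumes ok: "okp a f"
  shows "Dset (Gends a) t T 5 f 1 = {}"
proof -
  have af: "(a = 1 \<and> f = 5) \<or> (a = 5 \<and> f = 1)" using ok by (simp add: okp_def)
  have f5: "f \<in> {1..5}" using af by auto
  note R = RS_iff[OF ok]
  from af show ?thesis
  proof (elim disjE conjE)
    assume a: "a = 1" and f: "f = 5"
    show ?thesis
      apply (rule set_eqI)
      unfolding Dset_def R mem_Collect_eq empty_iff Cex_alt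
      apply (simp add: supp5_upd par_simps a f)
      apply (auto simp: odd_pos Suc_le_eq)
      apply ((fastforce dest: odd_pos)+)?
      done
  next
    assume a: "a = 5" and f: "f = 1"
    show ?thesis
      apply (rule set_eqI)
      unfolding Dset_def R mem_Collect_eq empty_iff Cex_alt
      apply (simp add: supp5_upd par_simps a f)
      apply (auto simp: odd_pos Suc_le_eq)
      apply ((fastforce dest: odd_pos)+)?
      done
  qed
qed

lemma finite_Qs:
  assumes pos: "\<forall>i\<in>{1..5}. t i > 0" and S: "S \<subseteq> {1..5}" and oo: "supp5 oo"
  shows "finite (Qs t S oo T)"
  by (rule finite_subset[OF _ finite_supp5[OF pos, of T]]) (use Qs_mem[OF S oo] in blast)

lemma Qs_disj:
  assumes "i \<in> S1" "i \<notin> S2" "o2 i < o1 i"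
  shows "Qs t S1 o1 T \<inter> Qs t S2 o2 T = {}"
proof -
  { fix m assume m1: "m \<in> Qs t S1 o1 T" and m2: "m \<in> Qs t S2 o2 T"
    have "o1 i \<le> m i" using m1 assms(1) unfolding Qs_def by blast
    moreover have "m i = o2 i" using m2 assms(2) unfolding Qs_def by blast
    ultimately have False using assms(3) by simp }
  thus ?thesis by blast
qed

lemma card_Qs2:
  assumes pos: "\<forall>i\<in>{1..5}. t i > 0" and S1: "S1 \<subseteq> {1..5}" and o1: "supp5 o1"
    and S2: "S2 \<subseteq> {1..5}" and o2: "supp5 o2" and d: "Qs t S1 o1 T \<inter> Qs t S2 o2 T = {}"
  shows "real (card (Qs t S1 o1 T \<union> Qs t S2 o2 T)) =
     real (lattice_count t S1 ((T - W t o1) / 2)) + real (lattice_count t S2 ((T - W t o2) / 2))"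
  using card_Un_disjoint[OF finite_Qs[OF pos S1 o1] finite_Qs[OF pos S2 o2] d] card_Qs[OF S1 o1] card_Qs[OF S2 o2]
  by simp

lemma N_formula:
  assumes pos: "\<forall>i\<in>{1..5}. t i > 0"
    and ind: "\<forall>q :: nat \<Rightarrow> rat. (\<Sum>i=1..5. of_rat (q i) * t i) = 0 \<longrightarrow> (\<forall>i\<in>{1..5}. q i = 0)"
    and ok: "okp a f"
  shows "real (num_points H_edges (Gends a) t 0 T) =
    real (lattice_count t {2,3,4,f} ((T - 2 * t 3) / 2)) + real (lattice_count t {2} (T / 2))
    + real (lattice_count t {a,3,4,f} ((T - 2 * t 3) / 2)) + real (lattice_count t {a} (T / 2))
    + real (lattice_count t {a,2} (T / 2))
    + real (lattice_count t {a,2,4,f} ((T - (t 3 + 2 * t 4)) / 2))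
    + real (lattice_count t {a,2,f} ((T - (t 3 + 2 * t f)) / 2))
    + real (lattice_count t {a,2,3,f} ((T - t 3) / 2))
    + real (lattice_count t {a,2,3,4} ((T - t 3) / 2))"
proof -
  have af: "(a = 1 \<and> f = 5) \<or> (a = 5 \<and> f = 1)" using ok by (simp add: okp_def)
  have f5: "f \<in> {1..5}" using af by auto
  have W: "W t (\<lambda>i. if i = 3 then 2 else 0) = 2 * t 3" "W t (\<lambda>_. 0) = 0"
    "W t (\<lambda>i. if i = 3 then 1 else 0) = t 3"
    "W t (\<lambda>i. if i = 3 then 1 else if i = 4 then 2 else 0) = t 3 + 2 * t 4"
    "W t (\<lambda>i. if i = 3 then 1 else if i = f then 2 else 0) = t 3 + 2 * t f"
    using af unfolding W_expand by auto
  have S: "{2,3,4,f} \<subseteq> {1..5::nat}" "{2} \<subseteq> {1..5::nat}" "{a,3,4,f} \<subseteq> {1..5::nat}" "{a} \<subseteq> {1..5::nat}"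
    "{a,2} \<subseteq> {1..5::nat}" "{a,2,4,f} \<subseteq> {1..5::nat}" "{a,2,f} \<subseteq> {1..5::nat}"
    "{a,2,3,f} \<subseteq> {1..5::nat}" "{a,2,3,4} \<subseteq> {1..5::nat}"
    using af by auto
  have s4: "supp5 (\<lambda>i. if i = 3 then 1 else if i = 4 then 2 else 0)"
    by (rule supp5_o(3)[of 4, simplified])
  have s5: "supp5 (\<lambda>i. if i = 3 then 1 else if i = f then 2 else 0)" by (rule supp5_o(3)[OF f5])
  have e1: "Dset (Gends a) t T 2 a 0 = {}" "Dset (Gends a) t T 3 2 0 = {}" "Dset (Gends a) t T 4 4 1 = {}"
    "Dset (Gends a) t T 5 f 1 = {}"
    using D_2a0[OF ok] D_320[OF ok] D_441[OF ok] D_5f1[OF ok] by auto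
  have c1: "real (card (Dset (Gends a) t T 0 a 2)) =
      real (lattice_count t {2,3,4,f} ((T - 2 * t 3) / 2)) + real (lattice_count t {2} (T / 2))"
    unfolding D_0a2[OF ok]
    by (subst card_Qs2[OF pos S(1) supp5_o(1) S(2) supp5_o(2) Qs_disj[of 3]]) (use af W in auto)
  have c2: "real (card (Dset (Gends a) t T 0 2 3)) =
      real (lattice_count t {a,3,4,f} ((T - 2 * t 3) / 2)) + real (lattice_count t {a} (T / 2))"
    unfolding D_023[OF ok]
    by (subst card_Qs2[OF pos S(3) supp5_o(1) S(4) supp5_o(2) Qs_disj[of 3]]) (use af W in auto)
  have c3: "real (card (Dset (Gends a) t T 0 3 1)) = real (lattice_count t {a,2} (T / 2))"
    unfolding D_031[OF ok] using card_Qs[OF S(5) supp5_o(2)] W by simp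
  have c4: "real (card (Dset (Gends a) t T 1 3 0)) =
      real (lattice_count t {a,2,4,f} ((T - (t 3 + 2 * t 4)) / 2))
      + real (lattice_count t {a,2,f} ((T - (t 3 + 2 * t f)) / 2))"
    unfolding D_130[OF ok]
    by (subst card_Qs2[OF pos S(6) s4 S(7) s5 Qs_disj[of 4]]) (use af W in auto)
  have c5: "real (card (Dset (Gends a) t T 1 4 4)) = real (lattice_count t {a,2,3,f} ((T - t 3) / 2))"
    unfolding D_144[OF ok] using card_Qs[OF S(8) supp5_o(1)] W by simp
  have c6: "real (card (Dset (Gends a) t T 1 f 5)) = real (lattice_count t {a,2,3,4} ((T - t 3) / 2))"
    unfolding D_1f5[OF ok] using card_Qs[OF S(9) supp5_o(1)] W by simp
  show ?thesis using N_D[OF pos ind ok, of T] e1 c1 c2 c3 c4 c5 c6 by simp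
qed

theorem mainTheorem5:
  fixes t :: "nat \<Rightarrow> real"
  assumes pos: "\<forall>i\<in>{1..5}. t i > 0"
    and A1: "assumption1 t"
  shows "(\<lambda>T. real (num_points H_edges H_ends t vA T) - real (num_points H_edges H'_ends t vA T)
              - (- (1 / (96 * t 2 * t 4)) * (1 / t 5 - 1 / t 1) * T ^ 3))
         \<in> o[at_top](\<lambda>T. T ^ 3)"
proof -
  have ind: "\<forall>q :: nat \<Rightarrow> rat. (\<Sum>i=1..5. of_rat (q i) * t i) = 0 \<longrightarrow> (\<forall>i\<in>{1..5}. q i = 0)"
    using A1 unfolding assumption1_def by blast
  have asy: "\<exists>P R :: real. (\<lambda>T. real (lattice_count t S T) - (P * T ^ 4 + R * T ^ 3)) \<in> o[at_top](\<lambda>T. T ^ 3)"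
    if "S \<subseteq> {1..5}" "1 \<le> card S" "card S \<le> 4" for S
    using A1 that unfolding assumption1_def by blast
  have t1: "t 1 > 0" and t2: "t 2 > 0" and t3: "t 3 > 0" and t4: "t 4 > 0" and t5: "t 5 > 0" using pos by auto
  define L where "L = (\<lambda>S x. real (lattice_count t S x))"
  obtain Pa Ra where Pa: "(\<lambda>T. L {2,3,4,5} T - (Pa * T ^ 4 + Ra * T ^ 3)) \<in> o[at_top](\<lambda>T. T ^ 3)"
    using asy[of "{2,3,4,5}"] unfolding L_def by auto
  obtain Pb Rb where Pb: "(\<lambda>T. L {1,2,3,4} T - (Pb * T ^ 4 + Rb * T ^ 3)) \<in> o[at_top](\<lambda>T. T ^ 3)"
    using asy[of "{1,2,3,4}"] unfolding L_def by auto
  have Pa_val: "Pa = 1 / (24 * (t 2 * t 3 * t 4 * t 5))"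
    using P4_val[of "{2,3,4,5}" t Pa Ra] Pa pos unfolding L_def by (simp add: mult.assoc)
  have Pb_val: "Pb = 1 / (24 * (t 1 * t 2 * t 3 * t 4))"
    using P4_val[of "{1,2,3,4}" t Pb Rb] Pb pos unfolding L_def by (simp add: mult.assoc)
  have G1: "(\<lambda>T. L {2,3,4,5} ((T - t 3) / 2 - t 3 / 2) - L {2,3,4,5} ((T - t 3) / 2) + Pa * (t 3 / 2) * T ^ 3 / 2)
      \<in> o[at_top](\<lambda>T. T ^ 3)"
    by (rule shift4[OF Pa])
  have G2: "(\<lambda>T. L {1,2,3,4} ((T - t 3) / 2 - t 3 / 2) - L {1,2,3,4} ((T - t 3) / 2) + Pb * (t 3 / 2) * T ^ 3 / 2)
      \<in> o[at_top](\<lambda>T. T ^ 3)"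
    by (rule shift4[OF Pb])
  have sm: "(\<lambda>T. L S (T / 2 + c)) \<in> o[at_top](\<lambda>T. T ^ 3)" if "S \<subseteq> {1..5}" "card S \<le> 2" for S c
    unfolding L_def by (rule small2) (use that pos in \<open>auto intro: finite_subset\<close>)
  have s1: "(\<lambda>T. L {1} (T / 2 + 0)) \<in> o[at_top](\<lambda>T. T ^ 3)" by (rule sm) auto
  have s2: "(\<lambda>T. L {5} (T / 2 + 0)) \<in> o[at_top](\<lambda>T. T ^ 3)" by (rule sm) auto
  have s3: "(\<lambda>T. L {1,2} (T / 2 + 0)) \<in> o[at_top](\<lambda>T. T ^ 3)" by (rule sm) auto
  have s4: "(\<lambda>T. L {2,5} (T / 2 + 0)) \<in> o[at_top](\<lambda>T. T ^ 3)" by (rule sm) auto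
  have s5: "(\<lambda>T. L {2,5} (T / 2 + - t 3 / 2)) \<in> o[at_top](\<lambda>T. T ^ 3)" by (rule sm) auto
  have s6: "(\<lambda>T. L {1,2} (T / 2 + - t 3 / 2)) \<in> o[at_top](\<lambda>T. T ^ 3)" by (rule sm) auto
  have split125: "L {1,2,5} (x - t 5) - L {1,2,5} (x - t 1) = L {2,5} x - L {1,2} x" for x
  proof -
    have "lattice_count t {1,2,5} x = lattice_count t ({1,2,5} - {5}) x + lattice_count t {1,2,5} (x - t 5)"
      using LS_split[of "{1,2,5}" t 5 x] pos by (simp add: lattice_count_LS)
    moreover have "lattice_count t {1,2,5} x = lattice_count t ({1,2,5} - {1}) x + lattice_count t {1,2,5} (x - t 1)"
      using LS_split[of "{1,2,5}" t 1 x] pos by (simp add: lattice_count_LS)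
    moreover have "{1,2,5} - {5} = {1,2::nat}" "{1,2,5} - {1} = {2,5::nat}" by auto
    ultimately show ?thesis unfolding L_def by simp
  qed
  have N1: "real (num_points H_edges H_ends t vA T) =
    L {2,3,4,5} ((T - 2 * t 3) / 2) + L {2} (T / 2) + L {1,3,4,5} ((T - 2 * t 3) / 2) + L {1} (T / 2)
    + L {1,2} (T / 2) + L {1,2,4,5} ((T - (t 3 + 2 * t 4)) / 2) + L {1,2,5} ((T - (t 3 + 2 * t 5)) / 2)
    + L {1,2,3,5} ((T - t 3) / 2) + L {1,2,3,4} ((T - t 3) / 2)" for T
    using N_formula[OF pos ind okp15, of T] unfolding H_Gends vA_def L_def by simp
  have sets: "{2,3,4,1} = {1,2,3,4::nat}" "{5,3,4,1} = {1,3,4,5::nat}" "{5,2} = {2,5::nat}"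
    "{5,2,4,1} = {1,2,4,5::nat}" "{5,2,1} = {1,2,5::nat}" "{5,2,3,1} = {1,2,3,5::nat}" "{5,2,3,4} = {2,3,4,5::nat}"
    by auto
  have N2: "real (num_points H_edges H'_ends t vA T) =
    L {1,2,3,4} ((T - 2 * t 3) / 2) + L {2} (T / 2) + L {1,3,4,5} ((T - 2 * t 3) / 2) + L {5} (T / 2)
    + L {2,5} (T / 2) + L {1,2,4,5} ((T - (t 3 + 2 * t 4)) / 2) + L {1,2,5} ((T - (t 3 + 2 * t 1)) / 2)
    + L {1,2,3,5} ((T - t 3) / 2) + L {2,3,4,5} ((T - t 3) / 2)" for T
    using N_formula[OF pos ind okp51, of T] unfolding H_Gends vA_def L_def sets by simp
  have const: "- (1 / (96 * t 2 * t 4)) * (1 / t 5 - 1 / t 1) = - Pa * t 3 / 4 + Pb * t 3 / 4"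
    unfolding Pa_val Pb_val using t1 t2 t3 t4 t5 by (simp add: field_simps)
  have eq: "real (num_points H_edges H_ends t vA T) - real (num_points H_edges H'_ends t vA T)
              - (- (1 / (96 * t 2 * t 4)) * (1 / t 5 - 1 / t 1) * T ^ 3)
      = (L {2,3,4,5} ((T - t 3) / 2 - t 3 / 2) - L {2,3,4,5} ((T - t 3) / 2) + Pa * (t 3 / 2) * T ^ 3 / 2)
      - (L {1,2,3,4} ((T - t 3) / 2 - t 3 / 2) - L {1,2,3,4} ((T - t 3) / 2) + Pb * (t 3 / 2) * T ^ 3 / 2)
      + L {1} (T / 2 + 0) - L {5} (T / 2 + 0) + L {1,2} (T / 2 + 0) - L {2,5} (T / 2 + 0)
      + L {2,5} (T / 2 + - t 3 / 2) - L {1,2} (T / 2 + - t 3 / 2)" for T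
  proof -
    have a1: "(T - 2 * t 3) / 2 = (T - t 3) / 2 - t 3 / 2" by (simp add: field_simps)
    have a2: "(T - (t 3 + 2 * t 4)) / 2 = (T - t 3) / 2 - t 4" by (simp add: field_simps)
    have a3: "(T - (t 3 + 2 * t 5)) / 2 = (T - t 3) / 2 - t 5" by (simp add: field_simps)
    have a4: "(T - (t 3 + 2 * t 1)) / 2 = (T - t 3) / 2 - t 1" by (simp add: field_simps)
    have a5: "T / 2 + - t 3 / 2 = (T - t 3) / 2" by (simp add: field_simps)
    have sp: "L {1,2,5} ((T - t 3) / 2 - t 5) - L {1,2,5} ((T - t 3) / 2 - t 1)
        = L {2,5} ((T - t 3) / 2) - L {1,2} ((T - t 3) / 2)" by (rule split125)
    show ?thesis unfolding N1 N2 a1 a2 a3 a4 a5 const using sp by (simp add: algebra_simps)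
  qed
  show ?thesis unfolding eq
    by (intro sum_in_smallo G1 G2 s1 s2 s3 s4 s5 s6)
qed

end
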